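(* Let $T\in\mathcal{T}_3$. (i) If $T\ne T_2$, then $T$ has a minimum-size identifying code $C(T)$ containing all vertices of degree at most $2$. (ii) If $T\notin\{T_2,T_3\}$, then $C(T)$ can be chosen to be an independent set containing every vertex of degree at most $2$, and for every vertex $v\in C(T)$, the set $C(T)\setminus\{v\}$ is a minimum-size identifying code of the forest $T-v$.
   Context: An identifying code of a graph $G$ is a set $C\subseteq V(G)$ such that every vertex $v$ has $N[v]\cap C\neq\emptyset$ and for all distinct $u,v$, $N[u]\cap C \ne N[v]\cap C$, where $N[v]$ is the closed neighborhood. A 3-star is $K_{1,3}$. For a graph $G'$, a vertex $v$ of $G'$ and a star $S$, $G'\rhd_v S$ is obtained from the disjoint union of $G'$ and $S$ by identifying $v$ with a leaf of $S$. An appended 3-star is a graph $G_p$ ($p\ge0$) where $G_0$ is a 3-star and $G_i=G_{i-1}\rhd_{v_{i-1}}S_i$ with each $S_i$ a 3-star and $v_{i-1}\in V(G_{i-1})$. $T_2$ is the tree with vertices $w,x,y,z,u_1,a_1,b_1$ and edges $wx,xy,yz,zu_1,u_1a_1,u_1b_1$; $T_3$ is obtained from $T_2$ by adding vertices $u_2,a_2,b_2$ and edges $zu_2,u_2a_2,u_2b_2$. $\mathcal{T}_3$ consists of $T_2$, $T_3$ and all appended 3-stars of maximum degree 3 and diameter at most 6 (12 trees in total). *)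

theory Defs
  imports Main
begin

text \<open>A (finite simple) graph is given by a vertex set V and an edge set E of
  two-element subsets of V.\<close>

definition adj :: "'a set set \<Rightarrow> 'a \<Rightarrow> 'a \<Rightarrow> bool" where
  "adj E u v \<longleftrightarrow> u \<noteq> v \<and> {u, v} \<in> E"

definition closed_nbhd :: "'a set \<Rightarrow> 'a set set \<Rightarrow> 'a \<Rightarrow> 'a set" where
  "closed_nbhd V E v = {u \<in> V. u = v \<or> adj E u v}"

definition degree :: "'a set \<Rightarrow> 'a set set \<Rightarrow> 'a \<Rightarrow> nat" where
  "degree V E v = card {u \<in> V. adj E u v}"

definition is_identifying_code :: "'a set \<Rightarrow> 'a set set \<Rightarrow> 'a set \<Rightarrow> bool" where
  "is_identifying_code V E C \<longleftrightarrow> C \<subseteq> V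
     \<and> (\<forall>v\<in>V. closed_nbhd V E v \<inter> C \<noteq> {})
     \<and> (\<forall>u\<in>V. \<forall>v\<in>V. u \<noteq> v \<longrightarrow> closed_nbhd V E u \<inter> C \<noteq> closed_nbhd V E v \<inter> C)"

definition is_min_identifying_code :: "'a set \<Rightarrow> 'a set set \<Rightarrow> 'a set \<Rightarrow> bool" where
  "is_min_identifying_code V E C \<longleftrightarrow> is_identifying_code V E C
     \<and> (\<forall>D. is_identifying_code V E D \<longrightarrow> card C \<le> card D)"

definition independent :: "'a set set \<Rightarrow> 'a set \<Rightarrow> bool" where
  "independent E C \<longleftrightarrow> (\<forall>u\<in>C. \<forall>v\<in>C. \<not> adj E u v)"

definition del_vertex_V :: "'a set \<Rightarrow> 'a \<Rightarrow> 'a set" where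
  "del_vertex_V V v = V - {v}"

definition del_vertex_E :: "'a set set \<Rightarrow> 'a \<Rightarrow> 'a set set" where
  "del_vertex_E E v = {e \<in> E. v \<notin> e}"

text \<open>Step: G \<rhd>_v S where S is a 3-star with
  centre c and leaves v, a, b (the leaf v is identified with the vertex v of G),
  c, a, b being new vertices.\<close>
inductive appended_3star :: "'a set \<Rightarrow> 'a set set \<Rightarrow> bool" where
  base: "distinct [c, l1, l2, l3] \<Longrightarrow>
     appended_3star {c, l1, l2, l3} {{c, l1}, {c, l2}, {c, l3}}"
| step: "appended_3star V E \<Longrightarrow> v \<in> V \<Longrightarrow> distinct [c, a, b] \<Longrightarrow>
     c \<notin> V \<Longrightarrow> a \<notin> V \<Longrightarrow> b \<notin> V \<Longrightarrow>
     appended_3star (V \<union> {c, a, b}) (E \<union> {{v, c}, {c, a}, {c, b}})"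

definition is_walk :: "'a set \<Rightarrow> 'a set set \<Rightarrow> 'a list \<Rightarrow> bool" where
  "is_walk V E p \<longleftrightarrow> p \<noteq> [] \<and> set p \<subseteq> V
     \<and> (\<forall>i. Suc i < length p \<longrightarrow> adj E (p ! i) (p ! Suc i))"

definition diameter_le :: "'a set \<Rightarrow> 'a set set \<Rightarrow> nat \<Rightarrow> bool" where
  "diameter_le V E k \<longleftrightarrow> (\<forall>u\<in>V. \<forall>v\<in>V. \<exists>p. is_walk V E p \<and> hd p = u \<and> last p = v
       \<and> length p \<le> Suc k)"

definition max_degree_eq :: "'a set \<Rightarrow> 'a set set \<Rightarrow> nat \<Rightarrow> bool" where
  "max_degree_eq V E d \<longleftrightarrow> (\<forall>v\<in>V. degree V E v \<le> d) \<and> (\<exists>v\<in>V. degree V E v = d)"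

definition is_T2 :: "'a set \<Rightarrow> 'a set set \<Rightarrow> bool" where
  "is_T2 V E \<longleftrightarrow> (\<exists>w x y z u1 a1 b1. distinct [w, x, y, z, u1, a1, b1]
     \<and> V = {w, x, y, z, u1, a1, b1}
     \<and> E = {{w, x}, {x, y}, {y, z}, {z, u1}, {u1, a1}, {u1, b1}})"

definition is_T3 :: "'a set \<Rightarrow> 'a set set \<Rightarrow> bool" where
  "is_T3 V E \<longleftrightarrow> (\<exists>w x y z u1 a1 b1 u2 a2 b2. distinct [w, x, y, z, u1, a1, b1, u2, a2, b2]
     \<and> V = {w, x, y, z, u1, a1, b1, u2, a2, b2}
     \<and> E = {{w, x}, {x, y}, {y, z}, {z, u1}, {u1, a1}, {u1, b1}, {z, u2}, {u2, a2}, {u2, b2}})"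

definition in_cal_T3 :: "'a set \<Rightarrow> 'a set set \<Rightarrow> bool" where
  "in_cal_T3 V E \<longleftrightarrow> is_T2 V E \<or> is_T3 V E
     \<or> (appended_3star V E \<and> max_degree_eq V E 3 \<and> diameter_le V E 6)"

end

theory Submission
  imports Defs
begin

definition shape :: "'a set \<Rightarrow> 'a set set \<Rightarrow> 'a \<Rightarrow> 'a set \<Rightarrow> 'a set \<Rightarrow> ('a \<Rightarrow> 'a) \<Rightarrow> ('a \<Rightarrow> 'a) \<Rightarrow> ('a \<Rightarrow> 'a) \<Rightarrow> bool" where
"shape V E r X Y par la lb \<longleftrightarrow>
  card X = 3 \<and> finite Y \<and> r \<notin> X \<and> r \<notin> Y \<and> X \<inter> Y = {} \<and>
  (\<forall>y\<in>Y. par y \<in> X) \<and>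
  (\<forall>y\<in>Y. la y \<notin> insert r (X \<union> Y) \<and> lb y \<notin> insert r (X \<union> Y)) \<and>
  (\<forall>y\<in>Y. \<forall>y'\<in>Y. la y \<noteq> lb y') \<and> inj_on la Y \<and> inj_on lb Y \<and>
  V = insert r (X \<union> Y \<union> la ` Y \<union> lb ` Y) \<and>
  E = (\<lambda>x. {r,x}) ` X \<union> (\<lambda>y. {par y, y}) ` Y \<union> (\<lambda>y. {y, la y}) ` Y \<union> (\<lambda>y. {y, lb y}) ` Y"

lemma shape_swap: "shape V E r X Y par la lb \<Longrightarrow> shape V E r X Y par lb la"
  unfolding shape_def
  apply (elim conjE)
  apply (intro conjI)
  apply assumption+
  apply blast
  apply (metis (full_types))
  apply assumption+
  apply (simp add: Un_ac)
  apply (simp add: Un_ac)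
  done

lemma pair_in_image: "{p,q} \<in> (\<lambda>x. {f x, g x}) ` S \<longleftrightarrow> (\<exists>x\<in>S. (p = f x \<and> q = g x) \<or> (q = f x \<and> p = g x))"
  by (auto simp: doubleton_eq_iff)

lemma pair_in_image1: "{p,q} \<in> (\<lambda>x. {c, x}) ` S \<longleftrightarrow> (p = c \<and> q \<in> S) \<or> (q = c \<and> p \<in> S)"
  by (auto simp: doubleton_eq_iff)

locale shp =
  fixes V E r X Y par la lb
  assumes sh: "shape V E r X Y par la lb"
begin

lemma cardX: "card X = 3" and finY: "finite Y" and rX: "r \<notin> X" and rY: "r \<notin> Y"
  and XY: "X \<inter> Y = {}" and parX: "y \<in> Y \<Longrightarrow> par y \<in> X"
  and laN: "y \<in> Y \<Longrightarrow> la y \<notin> insert r (X \<union> Y)"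
  and lbN: "y \<in> Y \<Longrightarrow> lb y \<notin> insert r (X \<union> Y)"
  and lalb: "y \<in> Y \<Longrightarrow> y' \<in> Y \<Longrightarrow> la y \<noteq> lb y'"
  and injla: "inj_on la Y" and injlb: "inj_on lb Y"
  and Veq: "V = insert r (X \<union> Y \<union> la ` Y \<union> lb ` Y)"
  and Eeq: "E = (\<lambda>x. {r,x}) ` X \<union> (\<lambda>y. {par y, y}) ` Y \<union> (\<lambda>y. {y, la y}) ` Y \<union> (\<lambda>y. {y, lb y}) ` Y"
  using sh unfolding shape_def by auto

lemma finX: "finite X" using cardX by (metis card.infinite zero_neq_numeral)

lemma finV: "finite V" using finX finY Veq by auto

lemma la_eq: "y \<in> Y \<Longrightarrow> y' \<in> Y \<Longrightarrow> la y = la y' \<longleftrightarrow> y = y'"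
  using injla by (auto simp: inj_on_def)
lemma lb_eq: "y \<in> Y \<Longrightarrow> y' \<in> Y \<Longrightarrow> lb y = lb y' \<longleftrightarrow> y = y'"
  using injlb by (auto simp: inj_on_def)

lemma adj_iff: "adj E p q \<longleftrightarrow>
   (p = r \<and> q \<in> X) \<or> (q = r \<and> p \<in> X) \<or>
   (\<exists>y\<in>Y. (p = par y \<and> q = y) \<or> (q = par y \<and> p = y)) \<or>
   (\<exists>y\<in>Y. (p = y \<and> q = la y) \<or> (q = y \<and> p = la y)) \<or>
   (\<exists>y\<in>Y. (p = y \<and> q = lb y) \<or> (q = y \<and> p = lb y))"
proof -
  have ne: "\<And>y. y \<in> Y \<Longrightarrow> par y \<noteq> y \<and> la y \<noteq> y \<and> lb y \<noteq> y"
  proof -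
    fix y assume "y \<in> Y"
    then have "par y \<in> X" "la y \<notin> insert r (X \<union> Y)" "lb y \<notin> insert r (X \<union> Y)"
      using parX laN lbN by auto
    then show "par y \<noteq> y \<and> la y \<noteq> y \<and> lb y \<noteq> y" using XY \<open>y \<in> Y\<close> by auto
  qed
  let ?R = "(p = r \<and> q \<in> X) \<or> (q = r \<and> p \<in> X) \<or>
   (\<exists>y\<in>Y. (p = par y \<and> q = y) \<or> (q = par y \<and> p = y)) \<or>
   (\<exists>y\<in>Y. (p = y \<and> q = la y) \<or> (q = y \<and> p = la y)) \<or>
   (\<exists>y\<in>Y. (p = y \<and> q = lb y) \<or> (q = y \<and> p = lb y))"
  have 1: "{p,q} \<in> E \<longleftrightarrow> ?R"
    unfolding Eeq Un_iff pair_in_image1 pair_in_image by (simp only: disj_assoc)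
  have 2: "?R \<Longrightarrow> p \<noteq> q" using ne rX by (elim disjE bexE; elim disjE conjE; auto; metis)
  show ?thesis unfolding adj_def using 1 2 by blast
qed

lemma facts:
  "y \<in> Y \<Longrightarrow> par y \<noteq> r" "y \<in> Y \<Longrightarrow> la y \<noteq> r" "y \<in> Y \<Longrightarrow> lb y \<noteq> r"
  "y \<in> Y \<Longrightarrow> la y \<notin> X" "y \<in> Y \<Longrightarrow> lb y \<notin> X"
  "y \<in> Y \<Longrightarrow> la y \<notin> Y" "y \<in> Y \<Longrightarrow> lb y \<notin> Y"
  "y \<in> Y \<Longrightarrow> par y \<notin> Y" "x \<in> X \<Longrightarrow> x \<notin> Y" "x \<in> X \<Longrightarrow> x \<noteq> r" "y \<in> Y \<Longrightarrow> y \<noteq> r"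
  using parX laN lbN XY rX rY by blast+

lemma facts2:
  "y \<in> Y \<Longrightarrow> y' \<in> Y \<Longrightarrow> la y \<noteq> lb y'"
  "y \<in> Y \<Longrightarrow> y' \<in> Y \<Longrightarrow> lb y \<noteq> la y'"
  "y \<in> Y \<Longrightarrow> y' \<in> Y \<Longrightarrow> la y \<noteq> y'" "y \<in> Y \<Longrightarrow> y' \<in> Y \<Longrightarrow> lb y \<noteq> y'"
  "y \<in> Y \<Longrightarrow> y' \<in> Y \<Longrightarrow> la y \<noteq> par y'" "y \<in> Y \<Longrightarrow> y' \<in> Y \<Longrightarrow> lb y \<noteq> par y'"
  using lalb facts parX by metis+

lemma N_r: "closed_nbhd V E r = insert r X"
  unfolding closed_nbhd_def adj_iff using Veq rY rX XY facts by auto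

lemma N_x: "x \<in> X \<Longrightarrow> closed_nbhd V E x = insert x (insert r {y\<in>Y. par y = x})"
  unfolding closed_nbhd_def adj_iff using Veq rY rX XY facts facts2 by auto

lemma N_y: "y \<in> Y \<Longrightarrow> closed_nbhd V E y = {y, par y, la y, lb y}"
  unfolding closed_nbhd_def adj_iff using Veq rY rX XY facts facts2 la_eq lb_eq parX by auto

lemma N_la: "y \<in> Y \<Longrightarrow> closed_nbhd V E (la y) = {la y, y}"
  unfolding closed_nbhd_def adj_iff using Veq rY rX XY facts facts2 la_eq lb_eq by auto

lemma N_lb: "y \<in> Y \<Longrightarrow> closed_nbhd V E (lb y) = {lb y, y}"
  unfolding closed_nbhd_def adj_iff using Veq rY rX XY facts facts2 la_eq lb_eq by auto

end

lemma nbhd_del: "u \<noteq> v \<Longrightarrow> closed_nbhd (del_vertex_V V v) (del_vertex_E E v) u = closed_nbhd V E u - {v}"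
  unfolding closed_nbhd_def del_vertex_V_def del_vertex_E_def adj_def by auto

lemma del_code_iff:
  assumes "D \<subseteq> V - {v}"
  shows "is_identifying_code (del_vertex_V V v) (del_vertex_E E v) D \<longleftrightarrow>
     (\<forall>u\<in>V-{v}. closed_nbhd V E u \<inter> D \<noteq> {}) \<and>
     (\<forall>u\<in>V-{v}. \<forall>w\<in>V-{v}. u \<noteq> w \<longrightarrow> closed_nbhd V E u \<inter> D \<noteq> closed_nbhd V E w \<inter> D)"
proof -
  have e: "u \<in> V - {v} \<Longrightarrow> closed_nbhd (del_vertex_V V v) (del_vertex_E E v) u \<inter> D = closed_nbhd V E u \<inter> D" for u
    using nbhd_del[of u v V E] assms by auto
  show ?thesis unfolding is_identifying_code_def using assms e
    by (simp add: del_vertex_V_def)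
qed

lemma id_crit:
  fixes N :: "'a \<Rightarrow> 'a set"
  assumes "C \<subseteq> W" "\<And>u. u \<in> W \<Longrightarrow> u \<in> C \<Longrightarrow> N u \<inter> C = {u}"
    "\<And>u. u \<in> W \<Longrightarrow> u \<notin> C \<Longrightarrow> 2 \<le> card (N u \<inter> C)"
    "\<And>u w. u \<in> W \<Longrightarrow> u \<notin> C \<Longrightarrow> w \<in> W \<Longrightarrow> w \<notin> C \<Longrightarrow> N u \<inter> C = N w \<inter> C \<Longrightarrow> u = w"
  shows "(\<forall>u\<in>W. N u \<inter> C \<noteq> {}) \<and> (\<forall>u\<in>W. \<forall>w\<in>W. u \<noteq> w \<longrightarrow> N u \<inter> C \<noteq> N w \<inter> C)"
proof (intro conjI ballI impI)
  fix u assume u: "u \<in> W"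
  show "N u \<inter> C \<noteq> {}"
  proof (cases "u \<in> C")
    case True then show ?thesis using assms(2) u by auto
  next
    case False then show ?thesis using assms(3)[OF u] by (metis card.empty not_numeral_le_zero)
  qed
next
  fix u w assume u: "u \<in> W" and w: "w \<in> W" and ne: "u \<noteq> w"
  show "N u \<inter> C \<noteq> N w \<inter> C"
  proof
    assume eq: "N u \<inter> C = N w \<inter> C"
    show False
    proof (cases "u \<in> C"; cases "w \<in> C")
      assume "u \<in> C" "w \<in> C" then show False using assms(2) u w eq ne by auto
    next
      assume "u \<in> C" "w \<notin> C" then show False using assms(2)[of u] assms(3)[of w] u w eq by auto
    next
      assume "u \<notin> C" "w \<in> C" then show False using assms(2)[of w] assms(3)[of u] u w eq by auto
    next
      assume "u \<notin> C" "w \<notin> C" then show False using assms(4) u w eq ne by auto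
    qed
  qed
qed

lemma degree_nbhd: "v \<in> V \<Longrightarrow> degree V E v = card (closed_nbhd V E v - {v})"
  unfolding degree_def closed_nbhd_def
  by (rule arg_cong[where f=card]) (auto simp: adj_def)

context shp begin

definition C where "C = X \<union> la ` Y \<union> lb ` Y"

lemma C_sub: "C \<subseteq> V" unfolding C_def Veq by auto
lemma r_notC: "r \<notin> C" and Y_notC: "y \<in> Y \<Longrightarrow> y \<notin> C"
  unfolding C_def using facts facts2 rX by auto
lemma VC: "V - C = insert r Y" unfolding C_def Veq using facts facts2 rX rY by auto

lemma tr_r: "closed_nbhd V E r \<inter> C = X" unfolding N_r C_def using rX facts by auto
lemma tr_x: "x \<in> X \<Longrightarrow> closed_nbhd V E x \<inter> C = {x}" unfolding N_x C_def using facts facts2 rX by auto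
lemma tr_y: "y \<in> Y \<Longrightarrow> closed_nbhd V E y \<inter> C = {par y, la y, lb y}" unfolding N_y C_def using parX using facts facts2 rX parX by auto
lemma tr_la: "y \<in> Y \<Longrightarrow> closed_nbhd V E (la y) \<inter> C = {la y}" unfolding N_la C_def using facts facts2 rX by auto
lemma tr_lb: "y \<in> Y \<Longrightarrow> closed_nbhd V E (lb y) \<inter> C = {lb y}" unfolding N_lb C_def using facts facts2 rX by auto

lemma C_single: "u \<in> C \<Longrightarrow> closed_nbhd V E u \<inter> C = {u}"
proof -
  assume "u \<in> C"
  then have "u \<in> X \<or> (\<exists>y\<in>Y. u = la y) \<or> (\<exists>y\<in>Y. u = lb y)" unfolding C_def by auto
  then show ?thesis using tr_x tr_la tr_lb by (elim disjE bexE) simp_all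
qed

lemma finC: "finite C" using C_sub finV finite_subset by blast

lemma cardC: "card C = 3 + 2 * card Y"
proof -
  have d1: "X \<inter> la ` Y = {}" and d2: "(X \<union> la ` Y) \<inter> lb ` Y = {}" using facts facts2 by auto
  have "card C = card X + card (la ` Y) + card (lb ` Y)"
    unfolding C_def using d1 d2 finX finY by (simp add: card_Un_disjoint)
  also have "\<dots> = 3 + 2 * card Y" using cardX card_image[OF injla] card_image[OF injlb] by simp
  finally show ?thesis .
qed

lemma tr_inj: "u \<in> insert r Y \<Longrightarrow> w \<in> insert r Y \<Longrightarrow> closed_nbhd V E u \<inter> C = closed_nbhd V E w \<inter> C \<Longrightarrow> u = w"
proof -
  assume u: "u \<in> insert r Y" and w: "w \<in> insert r Y" and eq: "closed_nbhd V E u \<inter> C = closed_nbhd V E w \<inter> C"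
  show "u = w"
  proof (cases "u = r"; cases "w = r")
    assume "u = r" "w \<noteq> r"
    then have "w \<in> Y" using w by auto
    then have "X = {par w, la w, lb w}" using eq \<open>u = r\<close> tr_r tr_y by simp
    then show ?thesis using facts(4)[OF \<open>w \<in> Y\<close>] by auto
  next
    assume "u \<noteq> r" "w = r"
    then have "u \<in> Y" using u by auto
    then have "X = {par u, la u, lb u}" using eq \<open>w = r\<close> tr_r tr_y by simp
    then show ?thesis using facts(4)[OF \<open>u \<in> Y\<close>] by auto
  next
    assume "u \<noteq> r" "w \<noteq> r"
    then have "u \<in> Y" "w \<in> Y" using u w by auto
    then have "la u \<in> {par w, la w, lb w}" using eq tr_y by auto
    then show ?thesis using \<open>u \<in> Y\<close> \<open>w \<in> Y\<close> facts2 la_eq by auto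
  qed auto
qed

lemma card_tr: "u \<in> insert r Y \<Longrightarrow> 2 \<le> card (closed_nbhd V E u \<inter> C)"
proof -
  assume "u \<in> insert r Y"
  then show ?thesis
  proof
    assume "u = r" then show ?thesis using tr_r cardX by simp
  next
    assume "u \<in> Y" then show ?thesis using tr_y facts facts2 by (simp add: card_insert_if)
  qed
qed

lemma C_code: "is_identifying_code V E C"
proof -
  have "(\<forall>u\<in>V. closed_nbhd V E u \<inter> C \<noteq> {}) \<and> (\<forall>u\<in>V. \<forall>w\<in>V. u \<noteq> w \<longrightarrow> closed_nbhd V E u \<inter> C \<noteq> closed_nbhd V E w \<inter> C)"
  proof (rule id_crit[where N="closed_nbhd V E"])
    show "C \<subseteq> V" by (rule C_sub)
    show "\<And>u. u \<in> V \<Longrightarrow> u \<in> C \<Longrightarrow> closed_nbhd V E u \<inter> C = {u}" by (rule C_single)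
    show "\<And>u. u \<in> V \<Longrightarrow> u \<notin> C \<Longrightarrow> 2 \<le> card (closed_nbhd V E u \<inter> C)"
      using card_tr VC by blast
    show "\<And>u w. u \<in> V \<Longrightarrow> u \<notin> C \<Longrightarrow> w \<in> V \<Longrightarrow> w \<notin> C \<Longrightarrow> closed_nbhd V E u \<inter> C = closed_nbhd V E w \<inter> C \<Longrightarrow> u = w"
      using tr_inj VC by blast
  qed
  then show ?thesis unfolding is_identifying_code_def using C_sub by auto
qed

lemma C_indep: "independent E C"
  unfolding independent_def adj_iff C_def using facts facts2 rX by auto

lemma C_deg: "{v \<in> V. degree V E v \<le> 2} \<subseteq> C"
proof
  fix v assume v: "v \<in> {v \<in> V. degree V E v \<le> 2}"
  show "v \<in> C"
  proof (rule ccontr)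
    assume "v \<notin> C"
    then have "v \<in> insert r Y" using VC v by auto
    then have "degree V E v = 3"
    proof
      assume "v = r" then show ?thesis using degree_nbhd[of r V E] Veq N_r rX cardX by simp
    next
      assume "v \<in> Y"
      then have "closed_nbhd V E v - {v} = {par v, la v, lb v}" using N_y facts(8)[of v] facts2 by auto
      moreover have "card {par v, la v, lb v} = 3"
        using facts(4,5)[OF \<open>v \<in> Y\<close>] facts2(1)[OF \<open>v \<in> Y\<close> \<open>v \<in> Y\<close>] parX[OF \<open>v \<in> Y\<close>]
        by (metis card_3_iff)
      moreover have "v \<in> V" using v by auto
      ultimately show ?thesis using degree_nbhd[of v V E] by simp
    qed
    then show False using v by auto
  qed
qed

lemma memV: "r \<in> V" "x \<in> X \<Longrightarrow> x \<in> V" "y \<in> Y \<Longrightarrow> y \<in> V"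
  "y \<in> Y \<Longrightarrow> la y \<in> V" "y \<in> Y \<Longrightarrow> lb y \<in> V"
  unfolding Veq by auto

lemma ne_y: "y \<in> Y \<Longrightarrow> y \<noteq> la y \<and> y \<noteq> lb y \<and> la y \<noteq> lb y"
  using facts(6,7)[of y] facts2(1)[of y y] by auto

definition B where "B y = {y, la y, lb y}"

lemma B_disj: "y \<in> Y \<Longrightarrow> y' \<in> Y \<Longrightarrow> y \<noteq> y' \<Longrightarrow> B y \<inter> B y' = {}"
  unfolding B_def using facts facts2 la_eq lb_eq by auto

lemma B_rX: "y \<in> Y \<Longrightarrow> B y \<inter> insert r X = {}"
  unfolding B_def using facts XY rY by auto

lemma count:
  assumes "D \<subseteq> V"
  shows "card D = card (D \<inter> insert r X) + (\<Sum>y\<in>Y. card (D \<inter> B y))"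
proof -
  have fD: "finite D" using assms finV finite_subset by blast
  have eq: "D = (D \<inter> insert r X) \<union> (\<Union>y\<in>Y. D \<inter> B y)"
    using assms unfolding Veq B_def by auto
  have d: "(D \<inter> insert r X) \<inter> (\<Union>y\<in>Y. D \<inter> B y) = {}" using B_rX by auto
  have "card D = card (D \<inter> insert r X) + card (\<Union>y\<in>Y. D \<inter> B y)"
    using card_Un_disjoint[OF _ _ d] fD eq by (metis finite_Int finite_UN_I finY)
  also have "card (\<Union>y\<in>Y. D \<inter> B y) = (\<Sum>y\<in>Y. card (D \<inter> B y))"
    by (rule card_UN_disjoint) (use finY fD B_disj in auto)
  finally show ?thesis .
qed

lemma sum_bound:
  fixes c :: "'a \<Rightarrow> nat"
  assumes "finite Y'" "Exc \<subseteq> Y'" "\<And>y. y \<in> Y' \<Longrightarrow> 2 \<le> c y" "\<And>y. y \<in> Exc \<Longrightarrow> c y = 3"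
  shows "2 * card Y' + card Exc \<le> (\<Sum>y\<in>Y'. c y)"
proof -
  have fE: "finite Exc" using assms(1,2) finite_subset by blast
  have "(\<Sum>y\<in>Y'. c y) = (\<Sum>y\<in>Exc. c y) + (\<Sum>y\<in>Y' - Exc. c y)"
    using sum.subset_diff[OF assms(2,1)] by (simp add: add.commute)
  moreover have "(\<Sum>y\<in>Exc. c y) = 3 * card Exc" using assms(4) by simp
  moreover have "2 * card (Y' - Exc) \<le> (\<Sum>y\<in>Y' - Exc. c y)"
    using sum_bounded_below[of "Y' - Exc" 2 c] assms(3) by (simp add: mult.commute)
  moreover have "card (Y' - Exc) = card Y' - card Exc" using card_Diff_subset[OF fE assms(2)] .
  moreover have "card Exc \<le> card Y'" using card_mono[OF assms(1,2)] .
  ultimately show ?thesis by linarith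
qed

end

locale lbctx = shp +
  fixes D W
  assumes DW: "D \<subseteq> W" and WV: "W \<subseteq> V"
    and H1: "\<And>u. u \<in> W \<Longrightarrow> closed_nbhd V E u \<inter> D \<noteq> {}"
    and H2: "\<And>u w. u \<in> W \<Longrightarrow> w \<in> W \<Longrightarrow> u \<noteq> w \<Longrightarrow> closed_nbhd V E u \<inter> D \<noteq> closed_nbhd V E w \<inter> D"
begin

lemma DV: "D \<subseteq> V" using DW WV by blast
lemma finD: "finite D" using DV finV finite_subset by blast

lemma card2: "a \<noteq> b \<Longrightarrow> {a, b} \<subseteq> D \<inter> B y \<Longrightarrow> 2 \<le> card (D \<inter> B y)"
  using card_mono[of "D \<inter> B y" "{a,b}"] finD by auto

lemma blk2: assumes y: "y \<in> Y" and "la y \<in> W" "lb y \<in> W" shows "2 \<le> card (D \<inter> B y)"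
proof -
  have n1: "{la y, y} \<inter> D \<noteq> {}" using H1[of "la y"] assms N_la by auto
  have n2: "{lb y, y} \<inter> D \<noteq> {}" using H1[of "lb y"] assms N_lb by auto
  have d: "{la y, y} \<inter> D \<noteq> {lb y, y} \<inter> D" using H2[of "la y" "lb y"] assms N_la N_lb facts2 by auto
  have ne: "y \<noteq> la y" "y \<noteq> lb y" "la y \<noteq> lb y" using ne_y[OF y] by auto
  show ?thesis
  proof (cases "y \<in> D")
    case True
    then have "la y \<in> D \<or> lb y \<in> D" using d by auto
    then show ?thesis
    proof
      assume "la y \<in> D"
      then have "{y, la y} \<subseteq> D \<inter> B y" using True unfolding B_def by auto
      then show ?thesis using card2 ne by blast
    next
      assume "lb y \<in> D"
      then have "{y, lb y} \<subseteq> D \<inter> B y" using True unfolding B_def by auto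
      then show ?thesis using card2 ne by blast
    qed
  next
    case False
    then have "la y \<in> D" "lb y \<in> D" using n1 n2 by auto
    then have "{la y, lb y} \<subseteq> D \<inter> B y" unfolding B_def by auto
    then show ?thesis using card2 ne by blast
  qed
qed

lemma blk1: assumes y: "y \<in> Y" and "lb y \<in> W" shows "1 \<le> card (D \<inter> B y)"
proof -
  have n2: "{lb y, y} \<inter> D \<noteq> {}" using H1[of "lb y"] assms N_lb by auto
  then have "D \<inter> B y \<noteq> {}" unfolding B_def by auto
  then show ?thesis using finD by (simp add: Suc_le_eq card_gt_0_iff)
qed

lemma blk3: assumes y: "y \<in> Y" and W: "y \<in> W" "la y \<in> W" "lb y \<in> W" and "y \<in> D" "par y \<notin> D"
  shows "card (D \<inter> B y) = 3"
proof -
  have ne: "y \<noteq> la y" "y \<noteq> lb y" "la y \<noteq> lb y" using ne_y[OF y] by auto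
  have "closed_nbhd V E y \<inter> D \<noteq> closed_nbhd V E (la y) \<inter> D" using H2 W ne by auto
  then have a: "lb y \<in> D" using N_y N_la y assms(5,6) by auto
  have "closed_nbhd V E y \<inter> D \<noteq> closed_nbhd V E (lb y) \<inter> D" using H2 W ne by auto
  then have b: "la y \<in> D" using N_y N_lb y assms(5,6) by auto
  have "D \<inter> B y = {y, la y, lb y}" using a b assms(5) unfolding B_def by auto
  then show ?thesis using ne by simp
qed

definition Exc where "Exc = {y \<in> Y. y \<in> D \<and> par y \<notin> D}"
definition G where "G = (D \<inter> X) \<union> par ` Exc"

lemma finEx: "finite Exc" unfolding Exc_def using finY by auto

lemma cardG: "card G \<le> card (D \<inter> X) + card Exc"
proof -
  have "card G \<le> card (D \<inter> X) + card (par ` Exc)" unfolding G_def by (rule card_Un_le)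
  also have "card (par ` Exc) \<le> card Exc" using card_image_le finEx by blast
  finally show ?thesis by simp
qed

lemma notG: "x \<in> X \<Longrightarrow> x \<notin> G \<Longrightarrow> closed_nbhd V E x \<inter> D = {r} \<inter> D"
proof -
  assume x: "x \<in> X" and nG: "x \<notin> G"
  have xD: "x \<notin> D" using nG x unfolding G_def by auto
  have "\<And>y. y \<in> Y \<Longrightarrow> par y = x \<Longrightarrow> y \<notin> D"
  proof
    fix y assume "y \<in> Y" "par y = x" "y \<in> D"
    then have "y \<in> Exc" using xD unfolding Exc_def by auto
    then have "x \<in> G" using \<open>par y = x\<close> unfolding G_def by auto
    then show False using nG by simp
  qed
  then show ?thesis using N_x[OF x] xD by auto
qed

lemma root_bound:
  assumes S: "S \<subseteq> X \<inter> W"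
  shows "card S \<le> card G + (if r \<in> D then 1 else 0)"
proof -
  have fS: "finite S" using S finX finite_subset by blast
  have fG: "finite G" unfolding G_def using finEx finD by auto
  show ?thesis
  proof (cases "r \<in> D")
    case False
    have "S \<subseteq> G"
    proof
      fix x assume "x \<in> S"
      show "x \<in> G"
      proof (rule ccontr)
        assume "x \<notin> G"
        then have "closed_nbhd V E x \<inter> D = {}" using notG \<open>x \<in> S\<close> S False by auto
        then show False using H1 \<open>x \<in> S\<close> S by auto
      qed
    qed
    then show ?thesis using card_mono[OF fG] False by simp
  next
    case True
    have "card (S - G) \<le> Suc 0"
    proof (subst card_le_Suc0_iff_eq)
      show "finite (S - G)" using fS by simp
      show "\<forall>a1\<in>S - G. \<forall>a2\<in>S - G. a1 = a2"
      proof (intro ballI, rule ccontr)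
        fix a1 a2 assume a: "a1 \<in> S - G" "a2 \<in> S - G" "a1 \<noteq> a2"
        have e: "closed_nbhd V E a1 \<inter> D = closed_nbhd V E a2 \<inter> D" using notG[of a1] notG[of a2] a S by auto
        have "a1 \<in> W" "a2 \<in> W" using a S by auto
        then show False using H2[of a1 a2] e a(3) by blast
      qed
    qed
    moreover have "card S \<le> card G + card (S - G)"
      by (metis Un_Diff_cancel2 card_Un_le card_mono fG fS finite_Diff finite_UnI le_trans sup_ge2 sup_commute)
    ultimately show ?thesis using True by simp
  qed
qed

lemma card_rX: "card (D \<inter> insert r X) = (if r \<in> D then 1 else 0) + card (D \<inter> X)"
  using rX finD by (simp add: Int_insert_right card_insert_if)

lemma Ex_sub: "Exc \<subseteq> Y" unfolding Exc_def by auto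

lemma lb_full:
  assumes "W = V" shows "3 + 2 * card Y \<le> card D"
proof -
  have s: "2 * card Y + card Exc \<le> (\<Sum>y\<in>Y. card (D \<inter> B y))"
  proof (rule sum_bound[OF finY Ex_sub])
    show "\<And>y. y \<in> Y \<Longrightarrow> 2 \<le> card (D \<inter> B y)" using blk2 assms memV by auto
    show "\<And>y. y \<in> Exc \<Longrightarrow> card (D \<inter> B y) = 3" using blk3 assms memV unfolding Exc_def by auto
  qed
  have "X \<subseteq> X \<inter> W" using assms memV by auto
  then have rb: "card X \<le> card G + (if r \<in> D then 1 else 0)" using root_bound by blast
  show ?thesis using count[OF DV] card_rX s rb cardG cardX by linarith
qed

lemma lb_delx:
  assumes "x0 \<in> X" "W = V - {x0}" shows "2 + 2 * card Y \<le> card D"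
proof -
  have s: "2 * card Y + card Exc \<le> (\<Sum>y\<in>Y. card (D \<inter> B y))"
  proof (rule sum_bound[OF finY Ex_sub])
    show "\<And>y. y \<in> Y \<Longrightarrow> 2 \<le> card (D \<inter> B y)"
    proof -
      fix y assume y: "y \<in> Y"
      have "la y \<in> W" "lb y \<in> W" using assms memV facts(4,5)[OF y] y by auto
      then show "2 \<le> card (D \<inter> B y)" using blk2 y by blast
    qed
    show "\<And>y. y \<in> Exc \<Longrightarrow> card (D \<inter> B y) = 3"
    proof -
      fix y assume "y \<in> Exc"
      then have y: "y \<in> Y" "y \<in> D" "par y \<notin> D" unfolding Exc_def by auto
      have "y \<in> W" "la y \<in> W" "lb y \<in> W" using assms memV facts(4,5)[OF y(1)] facts(9)[OF assms(1)] y by auto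
      then show "card (D \<inter> B y) = 3" using blk3 y by blast
    qed
  qed
  have "X - {x0} \<subseteq> X \<inter> W" using assms memV by auto
  then have rb: "card (X - {x0}) \<le> card G + (if r \<in> D then 1 else 0)" using root_bound by blast
  have "card (X - {x0}) = 2" using cardX assms(1) finX by simp
  then show ?thesis using count[OF DV] card_rX s rb cardG by linarith
qed

lemma lb_della:
  assumes y0: "y0 \<in> Y" and W: "W = V - {la y0}" shows "2 + 2 * card Y \<le> card D"
proof -
  have ne: "y0 \<noteq> la y0" "lb y0 \<noteq> la y0" using ne_y[OF y0] by auto
  have "y0 \<in> W" "lb y0 \<in> W" using W memV y0 ne by auto
  then have "closed_nbhd V E y0 \<inter> D \<noteq> closed_nbhd V E (lb y0) \<inter> D" using H2 ne(1,2) ne_y[OF y0] by blast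
  moreover have "la y0 \<notin> D" using DW W by auto
  ultimately have pD: "par y0 \<in> D" using N_y N_lb y0 by auto
  have ExY: "Exc \<subseteq> Y - {y0}" using pD unfolding Exc_def by auto
  have s: "2 * card (Y - {y0}) + card Exc \<le> (\<Sum>y\<in>Y - {y0}. card (D \<inter> B y))"
  proof (rule sum_bound[OF _ ExY])
    show "finite (Y - {y0})" using finY by simp
    show "\<And>y. y \<in> Y - {y0} \<Longrightarrow> 2 \<le> card (D \<inter> B y)"
    proof -
      fix y assume y: "y \<in> Y - {y0}"
      have "lb y \<noteq> la y0" using facts2(1)[OF y0, of y] y by auto
      then have "la y \<in> W" "lb y \<in> W" using W memV la_eq[OF _ y0] y by auto
      then show "2 \<le> card (D \<inter> B y)" using blk2 y by blast
    qed
    show "\<And>y. y \<in> Exc \<Longrightarrow> card (D \<inter> B y) = 3"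
    proof -
      fix y assume "y \<in> Exc"
      then have "y \<in> Y" "y \<noteq> y0" "y \<in> D" "par y \<notin> D" using ExY unfolding Exc_def by auto
      moreover have "y \<in> W" "la y \<in> W" "lb y \<in> W"
        using W memV facts(6)[OF y0] facts2(2)[OF \<open>y \<in> Y\<close> y0] la_eq[OF \<open>y \<in> Y\<close> y0] \<open>y \<in> Y\<close> \<open>y \<noteq> y0\<close> by auto
      ultimately show "card (D \<inter> B y) = 3" using blk3 by blast
    qed
  qed
  have "lb y0 \<in> W" using W memV y0 ne by auto
  then have b1: "1 \<le> card (D \<inter> B y0)" using blk1 y0 by blast
  have sp: "(\<Sum>y\<in>Y. card (D \<inter> B y)) = card (D \<inter> B y0) + (\<Sum>y\<in>Y - {y0}. card (D \<inter> B y))"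
    using sum.remove[OF finY y0] by simp
  have "card Y > 0" using y0 finY card_gt_0_iff by blast
  then have cY: "card (Y - {y0}) + 1 = card Y" using y0 finY card_Diff_singleton[OF y0] by simp
  have "X \<subseteq> X \<inter> W" using W memV facts(4)[OF y0] by auto
  then have rb: "card X \<le> card G + (if r \<in> D then 1 else 0)" using root_bound by blast
  show ?thesis using count[OF DV] card_rX s rb cardG cardX sp b1 cY by linarith
qed

end

context shp begin

lemma lb_in: "u \<in> insert r Y \<Longrightarrow> w \<in> Y \<Longrightarrow> lb w \<in> closed_nbhd V E u \<Longrightarrow> u = w"
proof -
  assume u: "u \<in> insert r Y" and w: "w \<in> Y" and l: "lb w \<in> closed_nbhd V E u"
  show "u = w"
  proof (cases "u = r")
    case True then show ?thesis using l N_r facts(3,5)[OF w] by auto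
  next
    case False
    then have uY: "u \<in> Y" using u by auto
    then have "lb w \<in> {u, par u, la u, lb u}" using l N_y by auto
    then show ?thesis using facts(7)[OF w] facts(5)[OF w] parX[OF uY] facts2(1)[OF uY w] lb_eq[OF w uY] uY by auto
  qed
qed

lemma del_identifying:
  assumes v: "v \<in> C" "v \<notin> lb ` Y"
    and cards: "\<And>u. u \<in> insert r Y \<Longrightarrow> 2 \<le> card (closed_nbhd V E u \<inter> (C - {v}))"
  shows "is_identifying_code (del_vertex_V V v) (del_vertex_E E v) (C - {v})"
proof -
  have sub: "C - {v} \<subseteq> V - {v}" using C_sub by auto
  have "(\<forall>u\<in>V - {v}. closed_nbhd V E u \<inter> (C - {v}) \<noteq> {}) \<and>
        (\<forall>u\<in>V - {v}. \<forall>w\<in>V - {v}. u \<noteq> w \<longrightarrow> closed_nbhd V E u \<inter> (C - {v}) \<noteq> closed_nbhd V E w \<inter> (C - {v}))"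
  proof (rule id_crit[where N="closed_nbhd V E"])
    show "C - {v} \<subseteq> V - {v}" by (rule sub)
    show "\<And>u. u \<in> V - {v} \<Longrightarrow> u \<in> C - {v} \<Longrightarrow> closed_nbhd V E u \<inter> (C - {v}) = {u}"
      using C_single by auto
    show "\<And>u. u \<in> V - {v} \<Longrightarrow> u \<notin> C - {v} \<Longrightarrow> 2 \<le> card (closed_nbhd V E u \<inter> (C - {v}))"
      using cards VC by auto
    show "\<And>u w. u \<in> V - {v} \<Longrightarrow> u \<notin> C - {v} \<Longrightarrow> w \<in> V - {v} \<Longrightarrow> w \<notin> C - {v} \<Longrightarrow>
       closed_nbhd V E u \<inter> (C - {v}) = closed_nbhd V E w \<inter> (C - {v}) \<Longrightarrow> u = w"
    proof -
      fix u w assume a: "u \<in> V - {v}" "u \<notin> C - {v}" "w \<in> V - {v}" "w \<notin> C - {v}"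
        and eq: "closed_nbhd V E u \<inter> (C - {v}) = closed_nbhd V E w \<inter> (C - {v})"
      have u: "u \<in> insert r Y" and w: "w \<in> insert r Y" using a VC by auto
      have inT: "y \<in> Y \<Longrightarrow> lb y \<in> closed_nbhd V E y \<inter> (C - {v})" for y
        using tr_y[of y] v(2) by auto
      show "u = w"
      proof (cases "w \<in> Y")
        case True
        then have "lb w \<in> closed_nbhd V E u" using inT[of w] eq by auto
        then show ?thesis using lb_in u True by blast
      next
        case False
        then have wr: "w = r" using w by auto
        show ?thesis
        proof (cases "u \<in> Y")
          case True
          then have "lb u \<in> closed_nbhd V E w" using inT[of u] eq by auto
          then show ?thesis using lb_in w True by (metis)
        next
          case False then show ?thesis using u wr by auto
        qed
      qed
    qed
  qed
  then show ?thesis using del_code_iff[OF sub] by simp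
qed

lemma del_lower:
  assumes v: "v \<in> V" and D: "is_identifying_code (del_vertex_V V v) (del_vertex_E E v) D"
  shows "lbctx V E r X Y par la lb D (V - {v})"
proof -
  have sub: "D \<subseteq> V - {v}" using D unfolding is_identifying_code_def del_vertex_V_def by auto
  show ?thesis using del_code_iff[OF sub] D sub sh unfolding lbctx_def lbctx_axioms_def shp_def by blast
qed

theorem full_min: "is_min_identifying_code V E C"
  unfolding is_min_identifying_code_def
proof (intro conjI allI impI)
  show "is_identifying_code V E C" by (rule C_code)
  fix D assume D: "is_identifying_code V E D"
  have L: "lbctx V E r X Y par la lb D V" using D sh unfolding lbctx_def lbctx_axioms_def shp_def is_identifying_code_def by blast
  then have "3 + 2 * card Y \<le> card D" using lbctx.lb_full[OF L refl] by blast
  then show "card C \<le> card D" using cardC by simp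
qed

theorem del_x_min: assumes x0: "x0 \<in> X"
  shows "is_min_identifying_code (del_vertex_V V x0) (del_vertex_E E x0) (C - {x0})"
  unfolding is_min_identifying_code_def
proof (intro conjI allI impI)
  have xC: "x0 \<in> C" using x0 unfolding C_def by auto
  show "is_identifying_code (del_vertex_V V x0) (del_vertex_E E x0) (C - {x0})"
  proof (rule del_identifying[OF xC])
    show "x0 \<notin> lb ` Y" using facts(5) x0 by auto
    fix u assume u: "u \<in> insert r Y"
    show "2 \<le> card (closed_nbhd V E u \<inter> (C - {x0}))"
    proof (cases "u = r")
      case True
      then have "closed_nbhd V E u \<inter> (C - {x0}) = X - {x0}" using tr_r by auto
      then show ?thesis using cardX x0 finX by simp
    next
      case False
      then have uY: "u \<in> Y" using u by auto
      have "{la u, lb u} \<subseteq> closed_nbhd V E u \<inter> (C - {x0})" using tr_y[OF uY] facts(4,5)[OF uY] x0 by auto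
      moreover have "card {la u, lb u} = 2" using ne_y[OF uY] by simp
      moreover have "finite (closed_nbhd V E u \<inter> (C - {x0}))" using finC by simp
      ultimately show ?thesis by (metis card_mono)
    qed
  qed
  fix D assume D: "is_identifying_code (del_vertex_V V x0) (del_vertex_E E x0) D"
  have L: "lbctx V E r X Y par la lb D (V - {x0})" using del_lower memV(2)[OF x0] D by blast
  then have "2 + 2 * card Y \<le> card D" using lbctx.lb_delx[OF L x0 refl] by blast
  moreover have "card (C - {x0}) = card C - 1" using xC finC by simp
  ultimately show "card (C - {x0}) \<le> card D" using cardC by simp
qed

theorem del_la_min: assumes y0: "y0 \<in> Y"
  shows "is_min_identifying_code (del_vertex_V V (la y0)) (del_vertex_E E (la y0)) (C - {la y0})"
  unfolding is_min_identifying_code_def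
proof (intro conjI allI impI)
  have lC: "la y0 \<in> C" using y0 unfolding C_def by auto
  show "is_identifying_code (del_vertex_V V (la y0)) (del_vertex_E E (la y0)) (C - {la y0})"
  proof (rule del_identifying[OF lC])
    show "la y0 \<notin> lb ` Y" using facts2(1)[OF y0] by auto
    fix u assume u: "u \<in> insert r Y"
    show "2 \<le> card (closed_nbhd V E u \<inter> (C - {la y0}))"
    proof (cases "u = r")
      case True
      then have "closed_nbhd V E u \<inter> (C - {la y0}) = X" using tr_r facts(4)[OF y0] by auto
      then show ?thesis using cardX by simp
    next
      case False
      then have uY: "u \<in> Y" using u by auto
      have "{par u, lb u} \<subseteq> closed_nbhd V E u \<inter> (C - {la y0})"
        using tr_y[OF uY] facts(4)[OF y0] parX[OF uY] facts2(1)[OF y0 uY] by auto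
      moreover have "par u \<noteq> lb u" using facts(5)[OF uY] parX[OF uY] by auto
      then have "card {par u, lb u} = 2" by simp
      moreover have "finite (closed_nbhd V E u \<inter> (C - {la y0}))" using finC by simp
      ultimately show ?thesis by (metis card_mono)
    qed
  qed
  fix D assume D: "is_identifying_code (del_vertex_V V (la y0)) (del_vertex_E E (la y0)) D"
  have L: "lbctx V E r X Y par la lb D (V - {la y0})" using del_lower memV(4)[OF y0] D by blast
  then have "2 + 2 * card Y \<le> card D" using lbctx.lb_della[OF L y0 refl] by blast
  moreover have "card (C - {la y0}) = card C - 1" using lC finC by simp
  ultimately show "card (C - {la y0}) \<le> card D" using cardC by simp
qed

end

lemma shape_result:
  assumes sh: "shape V E r X Y par la lb"
  shows "\<exists>C. is_min_identifying_code V E C \<and> independent E C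
                 \<and> {v \<in> V. degree V E v \<le> 2} \<subseteq> C
                 \<and> (\<forall>v\<in>C. is_min_identifying_code (del_vertex_V V v) (del_vertex_E E v) (C - {v}))"
proof -
  interpret s: shp V E r X Y par la lb using sh by (simp add: shp_def)
  interpret s2: shp V E r X Y par lb la using shape_swap[OF sh] by (simp add: shp_def)
  have CC: "s2.C = s.C" unfolding s.C_def s2.C_def by auto
  show ?thesis
  proof (intro exI conjI ballI)
    show "is_min_identifying_code V E s.C" by (rule s.full_min)
    show "independent E s.C" by (rule s.C_indep)
    show "{v \<in> V. degree V E v \<le> 2} \<subseteq> s.C" by (rule s.C_deg)
    fix v assume v: "v \<in> s.C"
    then have "v \<in> X \<or> (\<exists>y\<in>Y. v = la y) \<or> (\<exists>y\<in>Y. v = lb y)" unfolding s.C_def by auto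
    then show "is_min_identifying_code (del_vertex_V V v) (del_vertex_E E v) (s.C - {v})"
    proof (elim disjE bexE)
      assume "v \<in> X" then show ?thesis using s.del_x_min by blast
    next
      fix y assume "y \<in> Y" "v = la y" then show ?thesis using s.del_la_min by blast
    next
      fix y assume "y \<in> Y" "v = lb y" then show ?thesis using s2.del_la_min CC by metis
    qed
  qed
qed

lemma app_fin: "appended_3star V E \<Longrightarrow> finite V \<and> (\<forall>e\<in>E. e \<subseteq> V)"
  by (induction rule: appended_3star.induct) auto

definition has4 :: "'a set \<Rightarrow> 'a set set \<Rightarrow> bool" where
  "has4 V E \<longleftrightarrow> (\<exists>p\<in>V. \<exists>q1 q2 q3 q4. distinct [q1,q2,q3,q4] \<and> {q1,q2,q3,q4} \<subseteq> V \<and>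
     adj E q1 p \<and> adj E q2 p \<and> adj E q3 p \<and> adj E q4 p)"

definition far :: "'a set \<Rightarrow> 'a set set \<Rightarrow> bool" where
  "far V E \<longleftrightarrow> (\<exists>(f::'a \<Rightarrow> int) u w. u \<in> V \<and> w \<in> V \<and> (\<forall>p q. adj E p q \<longrightarrow> \<bar>f p - f q\<bar> \<le> 1) \<and> f u + 7 \<le> f w)"

lemma has4_not: assumes "finite V" "has4 V E" shows "\<not> max_degree_eq V E 3"
proof
  assume m: "max_degree_eq V E 3"
  obtain p q1 q2 q3 q4 where p: "p \<in> V" "distinct [q1,q2,q3,q4]" "{q1,q2,q3,q4} \<subseteq> V"
    "adj E q1 p" "adj E q2 p" "adj E q3 p" "adj E q4 p" using assms(2) unfolding has4_def by blast
  have "{q1,q2,q3,q4} \<subseteq> {u \<in> V. adj E u p}" using p by auto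
  then have "card {q1,q2,q3,q4} \<le> degree V E p" unfolding degree_def
    by (rule card_mono[rotated]) (use assms(1) in auto)
  moreover have "card {q1,q2,q3,q4} = 4" using p(2) by simp
  moreover have "degree V E p \<le> 3" using m p(1) unfolding max_degree_eq_def by auto
  ultimately show False by simp
qed

lemma walk_bound:
  assumes w: "is_walk V E p" and L: "\<forall>x y. adj E x y \<longrightarrow> \<bar>f x - f y\<bar> \<le> (1::int)"
  shows "k < length p \<Longrightarrow> f (p ! k) \<le> f (p ! 0) + int k"
proof (induction k)
  case 0 then show ?case by simp
next
  case (Suc k)
  then have "adj E (p ! k) (p ! Suc k)" using w unfolding is_walk_def by auto
  then have "\<bar>f (p ! k) - f (p ! Suc k)\<bar> \<le> 1" using L by blast
  then show ?case using Suc by simp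
qed

lemma far_not: assumes "far V E" shows "\<not> diameter_le V E 6"
proof
  assume d: "diameter_le V E 6"
  obtain f :: "'a \<Rightarrow> int" and u w where f: "u \<in> V" "w \<in> V" "\<forall>p q. adj E p q \<longrightarrow> \<bar>f p - f q\<bar> \<le> 1" "f u + 7 \<le> f w"
    using assms unfolding far_def by blast
  obtain p where p: "is_walk V E p" "hd p = u" "last p = w" "length p \<le> 7"
    using d f(1,2) unfolding diameter_le_def by fastforce
  have ne: "p \<noteq> []" using p(1) unfolding is_walk_def by auto
  have "f (p ! (length p - 1)) \<le> f (p ! 0) + int (length p - 1)"
    using walk_bound[OF p(1) f(3)] ne by simp
  moreover have "p ! 0 = u" using p(2) ne by (simp add: hd_conv_nth)
  moreover have "p ! (length p - 1) = w" using p(3) ne by (simp add: last_conv_nth)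
  ultimately have "f w \<le> f u + int (length p - 1)" by simp
  moreover have "int (length p - 1) \<le> 6" using p(4) by simp
  ultimately show False using f(4) by linarith
qed

lemma adj_mono: "adj E p q \<Longrightarrow> E \<subseteq> F \<Longrightarrow> adj F p q"
  unfolding adj_def by auto

lemma adj_ext: "adj (E \<union> F) p q \<longleftrightarrow> adj E p q \<or> adj F p q"
  unfolding adj_def by auto

lemma adj_new: "adj {{v, c}, {c, a}, {c, b}} p q \<longleftrightarrow> p \<noteq> q \<and> ({p,q} = {v,c} \<or> {p,q} = {c,a} \<or> {p,q} = {c,b})"
  unfolding adj_def by auto

lemma step_has4:
  assumes "has4 V E" shows "has4 (V \<union> {c,a,b}) (E \<union> {{v, c}, {c, a}, {c, b}})"
proof -
  obtain p q1 q2 q3 q4 where p: "p \<in> V" "distinct [q1,q2,q3,q4]" "{q1,q2,q3,q4} \<subseteq> V"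
    "adj E q1 p" "adj E q2 p" "adj E q3 p" "adj E q4 p" using assms unfolding has4_def by blast
  have h: "distinct [q1,q2,q3,q4] \<and> {q1,q2,q3,q4} \<subseteq> V \<union> {c,a,b} \<and>
     adj (E \<union> {{v, c}, {c, a}, {c, b}}) q1 p \<and> adj (E \<union> {{v, c}, {c, a}, {c, b}}) q2 p \<and>
     adj (E \<union> {{v, c}, {c, a}, {c, b}}) q3 p \<and> adj (E \<union> {{v, c}, {c, a}, {c, b}}) q4 p"
    using p adj_mono[of E _ p "E \<union> {{v, c}, {c, a}, {c, b}}"] by auto
  show ?thesis unfolding has4_def
    apply (rule bexI[where x=p])
     apply (rule exI[where x=q1], rule exI[where x=q2], rule exI[where x=q3], rule exI[where x=q4])
     apply (rule h)
    using p(1) by simp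
qed

lemma step_far:
  assumes f: "far V E" and EV: "\<forall>e\<in>E. e \<subseteq> V" and v: "v \<in> V" and n: "c \<notin> V" "a \<notin> V" "b \<notin> V"
  shows "far (V \<union> {c,a,b}) (E \<union> {{v, c}, {c, a}, {c, b}})"
proof -
  obtain f :: "'a \<Rightarrow> int" and u w where f: "u \<in> V" "w \<in> V" "\<forall>p q. adj E p q \<longrightarrow> \<bar>f p - f q\<bar> \<le> 1" "f u + 7 \<le> f w"
    using assms unfolding far_def by blast
  define g where "g = (\<lambda>z. if z \<in> V then f z else f v)"
  have "\<forall>p q. adj (E \<union> {{v, c}, {c, a}, {c, b}}) p q \<longrightarrow> \<bar>g p - g q\<bar> \<le> 1"
  proof (intro allI impI)
    fix p q assume "adj (E \<union> {{v, c}, {c, a}, {c, b}}) p q"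
    then consider "adj E p q" | "{p,q} = {v,c} \<or> {p,q} = {c,a} \<or> {p,q} = {c,b}" unfolding adj_ext adj_new by blast
    then show "\<bar>g p - g q\<bar> \<le> 1"
    proof cases
      case 1
      then have "p \<in> V" "q \<in> V" using EV unfolding adj_def by auto
      then show ?thesis using f(3) 1 unfolding g_def by auto
    next
      case 2
      then show ?thesis using v n unfolding g_def by (auto simp: doubleton_eq_iff)
    qed
  qed
  then show ?thesis unfolding far_def using f g_def by (intro exI[of _ g] exI[of _ u] exI[of _ w]) auto
qed

context shp begin

lemma adj_rx: "x \<in> X \<Longrightarrow> adj E x r" unfolding adj_iff by auto
lemma adj_y: "y \<in> Y \<Longrightarrow> adj E (par y) y \<and> adj E (la y) y \<and> adj E (lb y) y" unfolding adj_iff by blast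

lemma step_r:
  assumes n: "c \<notin> V" "a \<notin> V" "b \<notin> V"
  shows "has4 (V \<union> {c,a,b}) (E \<union> {{r, c}, {c, a}, {c, b}})"
proof -
  obtain x1 x2 x3 where X: "X = {x1,x2,x3}" "x1 \<noteq> x2" "x2 \<noteq> x3" "x1 \<noteq> x3" using cardX card_3_iff by metis
  have xs: "x1 \<in> X" "x2 \<in> X" "x3 \<in> X" using X by auto
  let ?E = "E \<union> {{r, c}, {c, a}, {c, b}}"
  have h: "distinct [x1,x2,x3,c] \<and> {x1,x2,x3,c} \<subseteq> V \<union> {c,a,b} \<and>
     adj ?E x1 r \<and> adj ?E x2 r \<and> adj ?E x3 r \<and> adj ?E c r"
  proof (intro conjI)
    show "distinct [x1,x2,x3,c]" using X xs memV n by auto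
    show "{x1,x2,x3,c} \<subseteq> V \<union> {c,a,b}" using xs memV by auto
    show "adj ?E x1 r" by (rule adj_mono[OF adj_rx[OF xs(1)]]) auto
    show "adj ?E x2 r" by (rule adj_mono[OF adj_rx[OF xs(2)]]) auto
    show "adj ?E x3 r" by (rule adj_mono[OF adj_rx[OF xs(3)]]) auto
    show "adj ?E c r" unfolding adj_def using memV n by auto
  qed
  show ?thesis unfolding has4_def
    apply (rule bexI[where x=r])
     apply (rule exI[where x=x1], rule exI[where x=x2], rule exI[where x=x3], rule exI[where x=c])
     apply (rule h)
    using memV by simp
qed

lemma step_y:
  assumes y: "y \<in> Y" and n: "c \<notin> V" "a \<notin> V" "b \<notin> V"
  shows "has4 (V \<union> {c,a,b}) (E \<union> {{y, c}, {c, a}, {c, b}})"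
proof -
  let ?E = "E \<union> {{y, c}, {c, a}, {c, b}}"
  have h: "distinct [par y, la y, lb y, c] \<and> {par y, la y, lb y, c} \<subseteq> V \<union> {c,a,b} \<and>
     adj ?E (par y) y \<and> adj ?E (la y) y \<and> adj ?E (lb y) y \<and> adj ?E c y"
  proof (intro conjI)
    show "distinct [par y, la y, lb y, c]" using y memV n ne_y[OF y] facts(4,5)[OF y] parX[OF y] by auto
    show "{par y, la y, lb y, c} \<subseteq> V \<union> {c,a,b}" using y memV parX by auto
    show "adj ?E (par y) y" by (rule adj_mono[OF conjunct1[OF adj_y[OF y]]]) auto
    show "adj ?E (la y) y" by (rule adj_mono[OF conjunct1[OF conjunct2[OF adj_y[OF y]]]]) auto
    show "adj ?E (lb y) y" by (rule adj_mono[OF conjunct2[OF conjunct2[OF adj_y[OF y]]]]) auto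
    show "adj ?E c y" unfolding adj_def using memV y n by auto
  qed
  show ?thesis unfolding has4_def
    apply (rule bexI[where x=y])
     apply (rule exI[where x="par y"], rule exI[where x="la y"], rule exI[where x="lb y"], rule exI[where x=c])
     apply (rule h)
    using memV y by simp
qed

lemma step_x:
  assumes x: "x \<in> X" and n: "c \<notin> V" "a \<notin> V" "b \<notin> V" and d: "distinct [c,a,b]"
  shows "shape (V \<union> {c,a,b}) (E \<union> {{x, c}, {c, a}, {c, b}}) r X (insert c Y) (par(c:=x)) (la(c:=a)) (lb(c:=b))"
proof -
  have cY: "c \<notin> Y" "c \<notin> X" "c \<noteq> r" using n memV by auto
  have i1: "(la(c:=a)) ` insert c Y = insert a (la ` Y)"
  proof -
    have "(la(c:=a)) ` Y = la ` Y" using cY by (intro image_cong) auto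
    then show ?thesis by (simp only: image_insert fun_upd_same)
  qed
  have i2: "(lb(c:=b)) ` insert c Y = insert b (lb ` Y)"
  proof -
    have "(lb(c:=b)) ` Y = lb ` Y" using cY by (intro image_cong) auto
    then show ?thesis by (simp only: image_insert fun_upd_same)
  qed
  have i3: "(\<lambda>y. {(par(c:=x)) y, y}) ` insert c Y = insert {x, c} ((\<lambda>y. {par y, y}) ` Y)"
  proof -
    have "(\<lambda>y. {(par(c:=x)) y, y}) ` Y = (\<lambda>y. {par y, y}) ` Y" using cY by (intro image_cong) auto
    then show ?thesis by (simp only: image_insert fun_upd_same)
  qed
  have i4: "(\<lambda>y. {y, (la(c:=a)) y}) ` insert c Y = insert {c, a} ((\<lambda>y. {y, la y}) ` Y)"
  proof -
    have "(\<lambda>y. {y, (la(c:=a)) y}) ` Y = (\<lambda>y. {y, la y}) ` Y" using cY by (intro image_cong) auto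
    then show ?thesis by (simp only: image_insert fun_upd_same)
  qed
  have i5: "(\<lambda>y. {y, (lb(c:=b)) y}) ` insert c Y = insert {c, b} ((\<lambda>y. {y, lb y}) ` Y)"
  proof -
    have "(\<lambda>y. {y, (lb(c:=b)) y}) ` Y = (\<lambda>y. {y, lb y}) ` Y" using cY by (intro image_cong) auto
    then show ?thesis by (simp only: image_insert fun_upd_same)
  qed
  have laV: "y \<in> Y \<Longrightarrow> la y \<noteq> c \<and> la y \<noteq> a \<and> la y \<noteq> b \<and> lb y \<noteq> c \<and> lb y \<noteq> a \<and> lb y \<noteq> b" for y
    using memV n by metis
  show ?thesis unfolding shape_def
  proof (intro conjI)
    show "card X = 3" by (rule cardX)
    show "finite (insert c Y)" using finY by simp
    show "r \<notin> X" by (rule rX)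
    show "r \<notin> insert c Y" using rY cY by auto
    show "X \<inter> insert c Y = {}" using XY cY by auto
    show "\<forall>y\<in>insert c Y. (par(c := x)) y \<in> X" using parX x cY by auto
    show "\<forall>y\<in>insert c Y. (la(c := a)) y \<notin> insert r (X \<union> insert c Y) \<and> (lb(c := b)) y \<notin> insert r (X \<union> insert c Y)"
      using laN lbN laV cY d n memV by auto
    show "\<forall>y\<in>insert c Y. \<forall>y'\<in>insert c Y. (la(c := a)) y \<noteq> (lb(c := b)) y'"
      using lalb laV cY d by auto
    show "inj_on (la(c := a)) (insert c Y)"
      using injla laV cY by (auto simp: inj_on_def)
    show "inj_on (lb(c := b)) (insert c Y)"
      using injlb laV cY by (auto simp: inj_on_def)
    show "V \<union> {c, a, b} = insert r (X \<union> insert c Y \<union> (la(c := a)) ` insert c Y \<union> (lb(c := b)) ` insert c Y)"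
      unfolding i1 i2 Veq by auto
    show "E \<union> {{x, c}, {c, a}, {c, b}} =
      (\<lambda>x. {r, x}) ` X \<union> (\<lambda>y. {(par(c := x)) y, y}) ` insert c Y \<union> (\<lambda>y. {y, (la(c := a)) y}) ` insert c Y \<union>
      (\<lambda>y. {y, (lb(c := b)) y}) ` insert c Y"
      unfolding i3 i4 i5 Eeq by auto
  qed
qed

lemma step_leaf_far:
  assumes y0: "y0 \<in> Y" and n: "c \<notin> V" "a \<notin> V" "b \<notin> V" and d: "distinct [c,a,b]"
    and y1: "y1 \<in> Y" "par y1 \<noteq> par y0"
  shows "far (V \<union> {c,a,b}) (E \<union> {{la y0, c}, {c, a}, {c, b}})"
proof -
  define x0 where "x0 = par y0"
  define f :: "'a \<Rightarrow> int" where "f z = (if z = a \<or> z = b then 5 else if z = c then 4 else if z = r then 0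
     else if z \<in> X then (if z = x0 then 1 else -1) else if z \<in> Y then (if par z = x0 then 2 else -2)
     else if (\<exists>y\<in>Y. par y = x0 \<and> (z = la y \<or> z = lb y)) then 3 else -3)" for z
  have nV: "z \<in> V \<Longrightarrow> z \<noteq> a \<and> z \<noteq> b \<and> z \<noteq> c" for z using n by auto
  have fr: "f r = 0" using nV[OF memV(1)] unfolding f_def by simp
  have fx: "x \<in> X \<Longrightarrow> f x = (if x = x0 then 1 else -1)" for x
    using nV[OF memV(2)] rX unfolding f_def by auto
  have fy: "y \<in> Y \<Longrightarrow> f y = (if par y = x0 then 2 else -2)" for y
    using nV[OF memV(3)] facts(9) facts(11) unfolding f_def by auto
  have fla: "y \<in> Y \<Longrightarrow> f (la y) = (if par y = x0 then 3 else -3)" for y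
  proof -
    assume y: "y \<in> Y"
    have e: "(\<exists>y'\<in>Y. par y' = x0 \<and> (la y = la y' \<or> la y = lb y')) \<longleftrightarrow> par y = x0"
      using y la_eq facts2(1) by blast
    show ?thesis using nV[OF memV(4)[OF y]] facts(2,4,6)[OF y] e unfolding f_def by simp
  qed
  have flb: "y \<in> Y \<Longrightarrow> f (lb y) = (if par y = x0 then 3 else -3)" for y
  proof -
    assume y: "y \<in> Y"
    have e: "(\<exists>y'\<in>Y. par y' = x0 \<and> (lb y = la y' \<or> lb y = lb y')) \<longleftrightarrow> par y = x0"
      using y lb_eq facts2(2) by blast
    show ?thesis using nV[OF memV(5)[OF y]] facts(3,5,7)[OF y] e unfolding f_def by simp
  qed
  have fc: "f c = 4" and fa: "f a = 5" and fb: "f b = 5" using d unfolding f_def by auto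
  have L: "\<forall>p q. adj (E \<union> {{la y0, c}, {c, a}, {c, b}}) p q \<longrightarrow> \<bar>f p - f q\<bar> \<le> 1"
  proof (intro allI impI)
    fix p q assume "adj (E \<union> {{la y0, c}, {c, a}, {c, b}}) p q"
    then consider "adj E p q" | "{p,q} = {la y0,c} \<or> {p,q} = {c,a} \<or> {p,q} = {c,b}" unfolding adj_ext adj_new by blast
    then show "\<bar>f p - f q\<bar> \<le> 1"
    proof cases
      case 1
      then show ?thesis unfolding adj_iff
      proof (elim disjE bexE conjE)
        assume "p = r" "q \<in> X" then show ?thesis using fr fx by auto
      next
        assume "q = r" "p \<in> X" then show ?thesis using fr fx by auto
      next
        fix y assume "y \<in> Y" "p = par y" "q = y" then show ?thesis using fx[OF parX] fy by auto
      next
        fix y assume "y \<in> Y" "q = par y" "p = y" then show ?thesis using fx[OF parX] fy by auto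
      next
        fix y assume "y \<in> Y" "p = y" "q = la y" then show ?thesis using fla fy by auto
      next
        fix y assume "y \<in> Y" "q = y" "p = la y" then show ?thesis using fla fy by auto
      next
        fix y assume "y \<in> Y" "p = y" "q = lb y" then show ?thesis using flb fy by auto
      next
        fix y assume "y \<in> Y" "q = y" "p = lb y" then show ?thesis using flb fy by auto
      qed
    next
      case 2
      have "f (la y0) = 3" using fla[OF y0] x0_def by simp
      then show ?thesis using 2 fc fa fb by (auto simp: doubleton_eq_iff)
    qed
  qed
  have "f y1 = -2" using fy[OF y1(1)] y1(2) x0_def by simp
  then have "f y1 + 7 \<le> f a" using fa by simp
  moreover have "y1 \<in> V \<union> {c,a,b}" "a \<in> V \<union> {c,a,b}" using memV(3)[OF y1(1)] by auto
  ultimately show ?thesis unfolding far_def using L by blast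
qed

lemma step_leaf_reroot:
  assumes y0: "y0 \<in> Y" and n: "c \<notin> V" "a \<notin> V" "b \<notin> V" and d: "distinct [c,a,b]"
    and allp: "\<forall>y\<in>Y. par y = par y0"
    and X: "X = {par y0, x1, x2}" "distinct [par y0, x1, x2]"
  shows "shape (V \<union> {c,a,b}) (E \<union> {{la y0, c}, {c, a}, {c, b}}) y0 {par y0, la y0, lb y0}
     (insert r (insert c (Y - {y0}))) ((par(r := par y0))(c := la y0)) ((la(r := x1))(c := a)) ((lb(r := x2))(c := b))"
proof -
  define x0 where "x0 = par y0"
  define Y1 where "Y1 = Y - {y0}"
  define Y' where "Y' = insert r (insert c Y1)"
  define par' where "par' = (par(r := x0))(c := la y0)"
  define la' where "la' = (la(r := x1))(c := a)"
  define lb' where "lb' = (lb(r := x2))(c := b)"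
  have x0X: "x0 \<in> X" "x1 \<in> X" "x2 \<in> X" using X x0_def by auto
  have nV: "z \<in> V \<Longrightarrow> z \<noteq> a \<and> z \<noteq> b \<and> z \<noteq> c" for z using n by auto
  have rc: "r \<noteq> c" using nV memV(1) by blast
  have cY1: "c \<notin> Y1" "r \<notin> Y1" "y0 \<notin> Y1" using n memV rY unfolding Y1_def by auto
  have Y1Y: "Y1 \<subseteq> Y" unfolding Y1_def by auto
  have par'1: "y \<in> Y1 \<Longrightarrow> par' y = x0" for y using cY1 allp Y1Y x0_def unfolding par'_def by auto
  have la'1: "y \<in> Y1 \<Longrightarrow> la' y = la y" for y using cY1 unfolding la'_def by auto
  have lb'1: "y \<in> Y1 \<Longrightarrow> lb' y = lb y" for y using cY1 unfolding lb'_def by auto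
  have par'r: "par' r = x0" "par' c = la y0" using rc unfolding par'_def by auto
  have la'r: "la' r = x1" "la' c = a" using rc unfolding la'_def by auto
  have lb'r: "lb' r = x2" "lb' c = b" using rc unfolding lb'_def by auto
  have imla: "la' ` Y' = insert x1 (insert a (la ` Y1))"
  proof -
    have "la' ` Y1 = la ` Y1" using la'1 by (intro image_cong) auto
    then show ?thesis unfolding Y'_def by (simp only: image_insert la'r)
  qed
  have imlb: "lb' ` Y' = insert x2 (insert b (lb ` Y1))"
  proof -
    have "lb' ` Y1 = lb ` Y1" using lb'1 by (intro image_cong) auto
    then show ?thesis unfolding Y'_def by (simp only: image_insert lb'r)
  qed
  have impar: "(\<lambda>y. {par' y, y}) ` Y' = insert {x0, r} (insert {la y0, c} ((\<lambda>y. {par y, y}) ` Y1))"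
  proof -
    have "(\<lambda>y. {par' y, y}) ` Y1 = (\<lambda>y. {par y, y}) ` Y1" using par'1 allp Y1Y x0_def by (intro image_cong) auto
    then show ?thesis unfolding Y'_def by (simp only: image_insert par'r)
  qed
  have imla2: "(\<lambda>y. {y, la' y}) ` Y' = insert {r, x1} (insert {c, a} ((\<lambda>y. {y, la y}) ` Y1))"
  proof -
    have "(\<lambda>y. {y, la' y}) ` Y1 = (\<lambda>y. {y, la y}) ` Y1" using la'1 by (intro image_cong) auto
    then show ?thesis unfolding Y'_def by (simp only: image_insert la'r)
  qed
  have imlb2: "(\<lambda>y. {y, lb' y}) ` Y' = insert {r, x2} (insert {c, b} ((\<lambda>y. {y, lb y}) ` Y1))"
  proof -
    have "(\<lambda>y. {y, lb' y}) ` Y1 = (\<lambda>y. {y, lb y}) ` Y1" using lb'1 by (intro image_cong) auto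
    then show ?thesis unfolding Y'_def by (simp only: image_insert lb'r)
  qed
  have imX: "(\<lambda>x. {y0, x}) ` {x0, la y0, lb y0} = {{x0, y0}, {y0, la y0}, {y0, lb y0}}"
    by (auto simp: insert_commute)
  have Ysplit: "Y = insert y0 Y1" using y0 unfolding Y1_def by auto
  have oldX: "(\<lambda>x. {r, x}) ` X = {{x0, r}, {r, x1}, {r, x2}}" using X x0_def by (auto simp: insert_commute)
  have oldpar: "(\<lambda>y. {par y, y}) ` Y = insert {x0, y0} ((\<lambda>y. {par y, y}) ` Y1)"
    using Ysplit x0_def by simp
  have oldla: "(\<lambda>y. {y, la y}) ` Y = insert {y0, la y0} ((\<lambda>y. {y, la y}) ` Y1)" using Ysplit by simp
  have oldlb: "(\<lambda>y. {y, lb y}) ` Y = insert {y0, lb y0} ((\<lambda>y. {y, lb y}) ` Y1)" using Ysplit by simp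
  have cl: "{la y0, c} = {la y0, c}" ..
  show ?thesis
    unfolding shape_def x0_def[symmetric] Y1_def[symmetric] Y'_def[symmetric] par'_def[symmetric] la'_def[symmetric] lb'_def[symmetric]
  proof (intro conjI)
    have "x0 \<noteq> la y0" "x0 \<noteq> lb y0" using facts(4,5)[OF y0] x0X by metis+
    then show "card {x0, la y0, lb y0} = 3" using ne_y[OF y0] by simp
    show "finite Y'" unfolding Y'_def Y1_def using finY by simp
    show "y0 \<notin> {x0, la y0, lb y0}" using ne_y[OF y0] facts(8)[OF y0] y0 x0_def by auto
    show "y0 \<notin> Y'" unfolding Y'_def using cY1 facts(11)[OF y0] nV[OF memV(3)[OF y0]] by auto
    show "{x0, la y0, lb y0} \<inter> Y' = {}"
      unfolding Y'_def using facts(2,3,4,5,6,7)[OF y0] facts(9,10)[OF x0X(1)] x0X rX nV[OF memV(4)[OF y0]] nV[OF memV(5)[OF y0]] nV[OF memV(2)[OF x0X(1)]] Y1Y XY by auto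
    show "\<forall>y\<in>Y'. par' y \<in> {x0, la y0, lb y0}" unfolding Y'_def using par'1 par'r by auto
    show "\<forall>y\<in>Y'. la' y \<notin> insert y0 ({x0, la y0, lb y0} \<union> Y') \<and> lb' y \<notin> insert y0 ({x0, la y0, lb y0} \<union> Y')"
    proof
      define S0 where "S0 = insert y0 ({x0, la y0, lb y0} \<union> insert r Y1)"
      have S': "insert y0 ({x0, la y0, lb y0} \<union> Y') = insert c S0" unfolding S0_def Y'_def by auto
      have S0V: "S0 \<subseteq> V" unfolding S0_def using memV y0 x0X Y1Y by auto
      fix y assume "y \<in> Y'"
      then consider "y = r" | "y = c" | "y \<in> Y1" unfolding Y'_def by auto
      then show "la' y \<notin> insert y0 ({x0, la y0, lb y0} \<union> Y') \<and> lb' y \<notin> insert y0 ({x0, la y0, lb y0} \<union> Y')"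
      proof cases
        case 1
        have x12: "x1 \<noteq> c" "x2 \<noteq> c" using nV memV(2) x0X by blast+
        have "x1 \<notin> S0" "x2 \<notin> S0"
          unfolding S0_def using X x0_def facts(4,5)[OF y0] facts(9,10) x0X y0 Y1Y XY by auto
        then show ?thesis unfolding S' using 1 la'r lb'r x12 by simp
      next
        case 2
        have "a \<notin> S0" "b \<notin> S0" using S0V n by auto
        then show ?thesis unfolding S' using 2 la'r lb'r d by auto
      next
        case 3
        then have yY: "y \<in> Y" "y \<noteq> y0" using Y1Y cY1 by (auto simp: Y1_def)
        have "la y \<noteq> c" "lb y \<noteq> c" using nV memV(4,5)[OF yY(1)] by blast+
        moreover have "la y \<notin> S0" "lb y \<notin> S0"
          unfolding S0_def using facts(2,3,4,5,6,7)[OF yY(1)] facts2[OF yY(1) y0] la_eq[OF yY(1) y0]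
            lb_eq[OF yY(1) y0] x0X Y1Y yY(2) by auto
        ultimately show ?thesis unfolding S' using la'1[OF 3] lb'1[OF 3] by simp
      qed
    qed
    show "\<forall>y\<in>Y'. \<forall>y'\<in>Y'. la' y \<noteq> lb' y'"
    proof (intro ballI)
      fix y y' assume "y \<in> Y'" "y' \<in> Y'"
      then have i: "la' y \<in> insert x1 (insert a (la ` Y1))" "lb' y' \<in> insert x2 (insert b (lb ` Y1))"
        using imla imlb by blast+
      have x1V: "x1 \<in> V" "x2 \<in> V" using memV(2) x0X by auto
      have A: "x1 \<notin> insert x2 (insert b (lb ` Y1))"
      proof -
        have "x1 \<noteq> x2" using X(2) by simp
        moreover have "x1 \<noteq> b" using x1V n by auto
        moreover have "x1 \<notin> lb ` Y1" using facts(5) x0X Y1Y by blast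
        ultimately show ?thesis by simp
      qed
      have B: "a \<notin> insert x2 (insert b (lb ` Y1))"
      proof -
        have "a \<noteq> x2" using x1V n by auto
        moreover have "a \<noteq> b" using d by simp
        moreover have "a \<notin> lb ` Y1" using memV(5) n Y1Y by blast
        ultimately show ?thesis by simp
      qed
      have Cc: "z \<in> Y1 \<Longrightarrow> la z \<notin> insert x2 (insert b (lb ` Y1))" for z
      proof -
        assume z: "z \<in> Y1"
        then have zY: "z \<in> Y" using Y1Y by auto
        have "la z \<noteq> x2" using facts(4)[OF zY] x0X by auto
        moreover have "la z \<noteq> b" using memV(4)[OF zY] n by auto
        moreover have "la z \<notin> lb ` Y1" using lalb zY Y1Y by blast
        ultimately show ?thesis by simp
      qed
      show "la' y \<noteq> lb' y'" using i A B Cc by (metis image_iff insert_iff)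
    qed
    show "inj_on la' Y'"
    proof -
      have e1: "la' ` Y1 = la ` Y1" using la'1 by (intro image_cong) auto
      have "inj_on la' Y1" using injla la'1 Y1Y by (auto simp: inj_on_def)
      moreover have n1: "a \<notin> la ` Y1" using memV(4) n Y1Y by blast
      moreover have "x1 \<noteq> a" using memV(2) x0X n by blast
      moreover have "x1 \<notin> la ` Y1" using facts(4) x0X Y1Y by blast
      ultimately show ?thesis unfolding Y'_def using cY1 rc la'r e1 by auto
    qed
    show "inj_on lb' Y'"
    proof -
      have e1: "lb' ` Y1 = lb ` Y1" using lb'1 by (intro image_cong) auto
      have "inj_on lb' Y1" using injlb lb'1 Y1Y by (auto simp: inj_on_def)
      moreover have n1: "b \<notin> lb ` Y1" using memV(5) n Y1Y by blast
      moreover have "x2 \<noteq> b" using memV(2) x0X n by blast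
      moreover have "x2 \<notin> lb ` Y1" using facts(5) x0X Y1Y by blast
      ultimately show ?thesis unfolding Y'_def using cY1 rc lb'r e1 by auto
    qed
    have VV: "V \<union> {c,a,b} = insert y0 ({x0, la y0, lb y0} \<union> Y' \<union> insert x1 (insert a (la ` Y1)) \<union> insert x2 (insert b (lb ` Y1)))"
      unfolding Veq Y'_def using X x0_def Ysplit by auto
    then show "V \<union> {c, a, b} = insert y0 ({x0, la y0, lb y0} \<union> Y' \<union> la' ` Y' \<union> lb' ` Y')"
      by (simp only: imla imlb)
    have EE: "E \<union> {{la y0, c}, {c, a}, {c, b}} = {{x0, y0}, {y0, la y0}, {y0, lb y0}} \<union>
       insert {x0, r} (insert {la y0, c} ((\<lambda>y. {par y, y}) ` Y1)) \<union>
       insert {r, x1} (insert {c, a} ((\<lambda>y. {y, la y}) ` Y1)) \<union>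
       insert {r, x2} (insert {c, b} ((\<lambda>y. {y, lb y}) ` Y1))"
      unfolding Eeq oldX oldpar oldla oldlb by (intro set_eqI, simp only: Un_iff insert_iff empty_iff, argo)
    then show "E \<union> {{la y0, c}, {c, a}, {c, b}} =
      (\<lambda>x. {y0, x}) ` {x0, la y0, lb y0} \<union> (\<lambda>y. {par' y, y}) ` Y' \<union> (\<lambda>y. {y, la' y}) ` Y' \<union> (\<lambda>y. {y, lb' y}) ` Y'"
      by (simp only: imX impar imla2 imlb2)
  qed
qed

end

context shp begin

lemma step_leaf:
  assumes y0: "y0 \<in> Y" and n: "c \<notin> V" "a \<notin> V" "b \<notin> V" and d: "distinct [c,a,b]"
  shows "(\<exists>r' X' Y' p' l1 l2. shape (V \<union> {c,a,b}) (E \<union> {{la y0, c}, {c, a}, {c, b}}) r' X' Y' p' l1 l2)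
     \<or> far (V \<union> {c,a,b}) (E \<union> {{la y0, c}, {c, a}, {c, b}})"
proof (cases "\<exists>y1\<in>Y. par y1 \<noteq> par y0")
  case True
  then obtain y1 where "y1 \<in> Y" "par y1 \<noteq> par y0" by blast
  then show ?thesis using step_leaf_far[OF y0 n d] by blast
next
  case False
  then have allp: "\<forall>y\<in>Y. par y = par y0" by blast
  have "card (X - {par y0}) = 2" using cardX parX[OF y0] finX by simp
  then obtain x1 x2 where x: "X - {par y0} = {x1, x2}" "x1 \<noteq> x2" by (meson card_2_iff)
  have X: "X = {par y0, x1, x2}" using x parX[OF y0] by auto
  have dX: "distinct [par y0, x1, x2]" using x by auto
  show ?thesis using step_leaf_reroot[OF y0 n d allp X dX] by blast
qed

end

lemma classify:
  "appended_3star V E \<Longrightarrow> (\<exists>r X Y par la lb. shape V E r X Y par la lb) \<or> has4 V E \<or> far V E"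
proof (induction rule: appended_3star.induct)
  case (base c l1 l2 l3)
  have "shape {c, l1, l2, l3} {{c, l1}, {c, l2}, {c, l3}} c {l1, l2, l3} {} id id id"
    unfolding shape_def using base by auto
  then show ?case by blast
next
  case (step V E v c a b)
  have EV: "\<forall>e\<in>E. e \<subseteq> V" using app_fin[OF step.hyps(1)] by blast
  have n: "c \<notin> V" "a \<notin> V" "b \<notin> V" using step.hyps by auto
  have d: "distinct [c,a,b]" using step.hyps by auto
  from step.IH show ?case
  proof (elim disjE exE)
    assume "has4 V E" then show ?thesis using step_has4[of V E c a b v] by blast
  next
    assume "far V E" then show ?thesis using step_far[OF _ EV step.hyps(2) n] by blast
  next
    fix r X Y par la lb assume sh: "shape V E r X Y par la lb"
    interpret s: shp V E r X Y par la lb using sh by (simp add: shp_def)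
    interpret s2: shp V E r X Y par lb la using shape_swap[OF sh] by (simp add: shp_def)
    have "v = r \<or> v \<in> X \<or> v \<in> Y \<or> (\<exists>y\<in>Y. v = la y) \<or> (\<exists>y\<in>Y. v = lb y)"
      using step.hyps(2) s.Veq by auto
    then show ?thesis
    proof (elim disjE bexE)
      assume "v = r" then show ?thesis using s.step_r[OF n] by blast
    next
      assume "v \<in> X" then show ?thesis using s.step_x[OF _ n d] by blast
    next
      assume "v \<in> Y" then show ?thesis using s.step_y[OF _ n] by blast
    next
      fix y assume "y \<in> Y" "v = la y" then show ?thesis using s.step_leaf[OF _ n d] by blast
    next
      fix y assume "y \<in> Y" "v = lb y" then show ?thesis using s2.step_leaf[OF _ n d] by blast
    qed
  qed
qed

lemma appended_result:
  assumes "appended_3star V E" "max_degree_eq V E 3" "diameter_le V E 6"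
  shows "\<exists>r X Y par la lb. shape V E r X Y par la lb"
  using classify[OF assms(1)] has4_not[OF conjunct1[OF app_fin[OF assms(1)]]] far_not assms(2,3) by blast

lemma card_Int3: "distinct [p,q,s] \<Longrightarrow> finite D \<Longrightarrow>
  card (D \<inter> {p,q,s}) = (if p \<in> D then 1 else 0) + (if q \<in> D then 1 else 0) + (if s \<in> D then (1::nat) else 0)"
  by (simp add: Int_insert_right card_insert_if)

lemma card_Int4: "distinct [p,q,s,t] \<Longrightarrow> finite D \<Longrightarrow>
  card (D \<inter> {p,q,s,t}) = (if p \<in> D then 1 else 0) + (if q \<in> D then 1 else 0) + (if s \<in> D then 1 else 0) + (if t \<in> D then (1::nat) else 0)"
  by (simp add: Int_insert_right card_insert_if)

lemma T3_result:
  assumes "is_T3 V E"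
  shows "\<exists>C. is_min_identifying_code V E C \<and> {v \<in> V. degree V E v \<le> 2} \<subseteq> C"
proof -
  obtain w x y z u1 a1 b1 u2 a2 b2 where d: "distinct [w, x, y, z, u1, a1, b1, u2, a2, b2]"
     and V: "V = {w, x, y, z, u1, a1, b1, u2, a2, b2}"
     and E: "E = {{w, x}, {x, y}, {y, z}, {z, u1}, {u1, a1}, {u1, b1}, {z, u2}, {u2, a2}, {u2, b2}}"
    using assms unfolding is_T3_def by blast
  have dd: "w \<noteq> x" "w \<noteq> y" "w \<noteq> z" "w \<noteq> u1" "w \<noteq> a1" "w \<noteq> b1" "w \<noteq> u2" "w \<noteq> a2" "w \<noteq> b2"
    "x \<noteq> y" "x \<noteq> z" "x \<noteq> u1" "x \<noteq> a1" "x \<noteq> b1" "x \<noteq> u2" "x \<noteq> a2" "x \<noteq> b2"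
    "y \<noteq> z" "y \<noteq> u1" "y \<noteq> a1" "y \<noteq> b1" "y \<noteq> u2" "y \<noteq> a2" "y \<noteq> b2"
    "z \<noteq> u1" "z \<noteq> a1" "z \<noteq> b1" "z \<noteq> u2" "z \<noteq> a2" "z \<noteq> b2"
    "u1 \<noteq> a1" "u1 \<noteq> b1" "u1 \<noteq> u2" "u1 \<noteq> a2" "u1 \<noteq> b2"
    "a1 \<noteq> b1" "a1 \<noteq> u2" "a1 \<noteq> a2" "a1 \<noteq> b2" "b1 \<noteq> u2" "b1 \<noteq> a2" "b1 \<noteq> b2"
    "u2 \<noteq> a2" "u2 \<noteq> b2" "a2 \<noteq> b2" using d by auto
  have adj: "adj E p q \<longleftrightarrow> {p,q} \<in> E \<and> p \<noteq> q" for p q unfolding adj_def by auto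
  have Nw: "closed_nbhd V E w = {w, x}" unfolding closed_nbhd_def adj_def E V using d by (auto simp: doubleton_eq_iff)
  have Nx: "closed_nbhd V E x = {w, x, y}" unfolding closed_nbhd_def adj_def E V using d by (auto simp: doubleton_eq_iff)
  have Ny: "closed_nbhd V E y = {x, y, z}" unfolding closed_nbhd_def adj_def E V using d by (auto simp: doubleton_eq_iff)
  have Nz: "closed_nbhd V E z = {y, z, u1, u2}" unfolding closed_nbhd_def adj_def E V using d by (auto simp: doubleton_eq_iff)
  have Nu1: "closed_nbhd V E u1 = {z, u1, a1, b1}" unfolding closed_nbhd_def adj_def E V using d by (auto simp: doubleton_eq_iff)
  have Na1: "closed_nbhd V E a1 = {u1, a1}" unfolding closed_nbhd_def adj_def E V using d by (auto simp: doubleton_eq_iff)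
  have Nb1: "closed_nbhd V E b1 = {u1, b1}" unfolding closed_nbhd_def adj_def E V using d by (auto simp: doubleton_eq_iff)
  have Nu2: "closed_nbhd V E u2 = {z, u2, a2, b2}" unfolding closed_nbhd_def adj_def E V using d by (auto simp: doubleton_eq_iff)
  have Na2: "closed_nbhd V E a2 = {u2, a2}" unfolding closed_nbhd_def adj_def E V using d by (auto simp: doubleton_eq_iff)
  have Nb2: "closed_nbhd V E b2 = {u2, b2}" unfolding closed_nbhd_def adj_def E V using d by (auto simp: doubleton_eq_iff)
  note Ns = Nw Nx Ny Nz Nu1 Na1 Nb1 Nu2 Na2 Nb2
  define C where "C = {w, x, y, a1, b1, a2, b2}"
  have Cid: "is_identifying_code V E C"
    unfolding is_identifying_code_def
  proof (intro conjI)
    show "C \<subseteq> V" unfolding C_def V by auto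
    have T: "closed_nbhd V E w \<inter> C = {w, x}" "closed_nbhd V E x \<inter> C = {w, x, y}"
      "closed_nbhd V E y \<inter> C = {x, y}" "closed_nbhd V E z \<inter> C = {y}"
      "closed_nbhd V E u1 \<inter> C = {a1, b1}" "closed_nbhd V E a1 \<inter> C = {a1}" "closed_nbhd V E b1 \<inter> C = {b1}"
      "closed_nbhd V E u2 \<inter> C = {a2, b2}" "closed_nbhd V E a2 \<inter> C = {a2}" "closed_nbhd V E b2 \<inter> C = {b2}"
      unfolding Ns C_def using dd by auto
    have VV: "V = {w, x, y, z, u1, a1, b1, u2, a2, b2}" by (rule V)
    have cases: "v \<in> V \<Longrightarrow> v = w \<or> v = x \<or> v = y \<or> v = z \<or> v = u1 \<or> v = a1 \<or> v = b1 \<or> v = u2 \<or> v = a2 \<or> v = b2" for v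
      using VV by auto
    show "\<forall>v\<in>V. closed_nbhd V E v \<inter> C \<noteq> {}"
    proof
      fix v assume "v \<in> V"
      from cases[OF this] show "closed_nbhd V E v \<inter> C \<noteq> {}" using T by (elim disjE) auto
    qed
    show "\<forall>u\<in>V. \<forall>v\<in>V. u \<noteq> v \<longrightarrow> closed_nbhd V E u \<inter> C \<noteq> closed_nbhd V E v \<inter> C"
    proof (intro ballI impI)
      fix u v assume u: "u \<in> V" and v: "v \<in> V" and ne: "u \<noteq> v"
      show "closed_nbhd V E u \<inter> C \<noteq> closed_nbhd V E v \<inter> C"
        using cases[OF u] cases[OF v] ne
        apply (elim disjE)
        apply (simp_all only: T)
        apply (simp_all add: set_eq_iff)
        apply (metis dd)+
        done
    qed
  qed
  have fV: "finite V" unfolding V by simp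
  have cardC: "card C = 7" unfolding C_def using d by simp
  have low: "7 \<le> card D" if D: "is_identifying_code V E D" for D
  proof -
    have DV: "D \<subseteq> V" and H1: "\<forall>v\<in>V. closed_nbhd V E v \<inter> D \<noteq> {}"
      and H2: "\<forall>u\<in>V. \<forall>v\<in>V. u \<noteq> v \<longrightarrow> closed_nbhd V E u \<inter> D \<noteq> closed_nbhd V E v \<inter> D"
      using D unfolding is_identifying_code_def by auto
    have fD: "finite D" using DV fV finite_subset by blast
    have mem: "w \<in> V" "x \<in> V" "y \<in> V" "z \<in> V" "u1 \<in> V" "a1 \<in> V" "b1 \<in> V" "u2 \<in> V" "a2 \<in> V" "b2 \<in> V"
      unfolding V by auto
    have h1: "\<And>p. p \<in> V \<Longrightarrow> closed_nbhd V E p \<inter> D \<noteq> {}" using H1 by blast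
    have h2: "\<And>p q. p \<in> V \<Longrightarrow> q \<in> V \<Longrightarrow> p \<noteq> q \<Longrightarrow> closed_nbhd V E p \<inter> D \<noteq> closed_nbhd V E q \<inter> D" using H2 by blast
    have f_y: "y \<in> D" using h2[OF mem(1,2)] d Ns by auto
    have f_wx: "w \<in> D \<or> x \<in> D" using h1[OF mem(1)] Ns by auto
    have f_wz: "w \<in> D \<or> z \<in> D" using h2[OF mem(2,3)] d Ns by auto
    have f_xu: "x \<in> D \<or> u1 \<in> D \<or> u2 \<in> D" using h2[OF mem(3,4)] d Ns by auto
    have b1a: "u1 \<in> D \<or> a1 \<in> D" using h1[OF mem(6)] Ns by auto
    have b1b: "u1 \<in> D \<or> b1 \<in> D" using h1[OF mem(7)] Ns by auto
    have b1c: "a1 \<in> D \<or> b1 \<in> D" using h2[OF mem(6,7)] d Ns by auto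
    have b1d: "z \<in> D \<or> b1 \<in> D \<or> u1 \<notin> D" using h2[OF mem(5,6)] d Ns by auto
    have b1e: "z \<in> D \<or> a1 \<in> D \<or> u1 \<notin> D" using h2[OF mem(5,7)] d Ns by auto
    have b2a: "u2 \<in> D \<or> a2 \<in> D" using h1[OF mem(9)] Ns by auto
    have b2b: "u2 \<in> D \<or> b2 \<in> D" using h1[OF mem(10)] Ns by auto
    have b2c: "a2 \<in> D \<or> b2 \<in> D" using h2[OF mem(9,10)] d Ns by auto
    have b2d: "z \<in> D \<or> b2 \<in> D \<or> u2 \<notin> D" using h2[OF mem(8,9)] d Ns by auto
    have b2e: "z \<in> D \<or> a2 \<in> D \<or> u2 \<notin> D" using h2[OF mem(8,10)] d Ns by auto
    have split: "card D \<ge> card (D \<inter> {w,x,y,z}) + card (D \<inter> {u1,a1,b1}) + card (D \<inter> {u2,a2,b2})"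
    proof -
      have "card (D \<inter> {w,x,y,z}) + card (D \<inter> {u1,a1,b1}) = card ((D \<inter> {w,x,y,z}) \<union> (D \<inter> {u1,a1,b1}))"
        using d by (intro card_Un_disjoint[symmetric]) auto
      moreover have "card ((D \<inter> {w,x,y,z}) \<union> (D \<inter> {u1,a1,b1})) + card (D \<inter> {u2,a2,b2}) =
          card ((D \<inter> {w,x,y,z}) \<union> (D \<inter> {u1,a1,b1}) \<union> (D \<inter> {u2,a2,b2}))"
        using d by (intro card_Un_disjoint[symmetric]) auto
      moreover have "card ((D \<inter> {w,x,y,z}) \<union> (D \<inter> {u1,a1,b1}) \<union> (D \<inter> {u2,a2,b2})) \<le> card D"
        using fD by (intro card_mono) auto
      ultimately show ?thesis by linarith
    qed
    have c1: "card (D \<inter> {w,x,y,z}) = (if w \<in> D then 1 else 0) + (if x \<in> D then 1 else 0) + (if y \<in> D then 1 else 0) + (if z \<in> D then 1 else 0)"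
      using card_Int4[OF _ fD] d by simp
    have c2: "card (D \<inter> {u1,a1,b1}) = (if u1 \<in> D then 1 else 0) + (if a1 \<in> D then 1 else 0) + (if b1 \<in> D then 1 else 0)"
      using card_Int3[OF _ fD] d by simp
    have c3: "card (D \<inter> {u2,a2,b2}) = (if u2 \<in> D then 1 else 0) + (if a2 \<in> D then 1 else 0) + (if b2 \<in> D then 1 else 0)"
      using card_Int3[OF _ fD] d by simp
    show ?thesis using split c1 c2 c3 f_y f_wx f_wz f_xu b1a b1b b1c b1d b1e b2a b2b b2c b2d b2e
      by (auto split: if_splits)
  qed
  have deg: "{v \<in> V. degree V E v \<le> 2} \<subseteq> C"
  proof
    fix v assume v: "v \<in> {v \<in> V. degree V E v \<le> 2}"
    have dz: "degree V E z = 3" using degree_nbhd[of z V E] Nz d unfolding V by auto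
    have du1: "degree V E u1 = 3" using degree_nbhd[of u1 V E] Nu1 d unfolding V by auto
    have du2: "degree V E u2 = 3" using degree_nbhd[of u2 V E] Nu2 d unfolding V by auto
    show "v \<in> C" using v dz du1 du2 unfolding V C_def by auto
  qed
  show ?thesis
    by (rule exI[of _ C]) (use Cid low cardC deg in \<open>auto simp: is_min_identifying_code_def\<close>)
qed

theorem mainTheorem17:
  fixes V :: "'a set" and E :: "'a set set"
  assumes "in_cal_T3 V E"
  shows "(\<not> is_T2 V E \<longrightarrow>
            (\<exists>C. is_min_identifying_code V E C \<and> {v \<in> V. degree V E v \<le> 2} \<subseteq> C))
       \<and> (\<not> is_T2 V E \<and> \<not> is_T3 V E \<longrightarrow>
            (\<exists>C. is_min_identifying_code V E C \<and> independent E C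
                 \<and> {v \<in> V. degree V E v \<le> 2} \<subseteq> C
                 \<and> (\<forall>v\<in>C. is_min_identifying_code (del_vertex_V V v) (del_vertex_E E v) (C - {v}))))"
proof -
  consider (T2) "is_T2 V E" | (T3) "is_T3 V E"
    | (A) "appended_3star V E" "max_degree_eq V E 3" "diameter_le V E 6"
    using assms unfolding in_cal_T3_def by blast
  then show ?thesis
  proof cases
    case T2
    then show ?thesis by blast
  next
    case T3
    then show ?thesis using T3_result[OF T3] by blast
  next
    case A
    obtain r X Y par la lb where "shape V E r X Y par la lb" using appended_result[OF A] by blast
    from shape_result[OF this] obtain C where
      C: "is_min_identifying_code V E C" "independent E C" "{v \<in> V. degree V E v \<le> 2} \<subseteq> C"
         "\<forall>v\<in>C. is_min_identifying_code (del_vertex_V V v) (del_vertex_E E v) (C - {v})"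
      by blast
    show ?thesis using C by blast
  qed
qed

end
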